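(* Let $N,l$ be positive integers, $m=2l$, $a=\begin{bmatrix}0&1\\-1&0\end{bmatrix}$, and for $z\in\mathbb{R}^l$ let $S(z)=\mathrm{diag}(z)\otimes a$. Let $\omega=\mathrm{col}(\omega_{01},\dots,\omega_{0l})\in\mathbb{R}^l$ with $\omega_{0k}>0$ for all $k$, and consider the leader system $\dot v=S(\omega)v$, $v\in\mathbb{R}^m$. Let $\bar{\mathcal G}$ be a digraph with node set $\{0,1,\dots,N\}$ such that $\bar{\mathcal G}$ contains a spanning tree rooted at node $0$ and the subgraph $\mathcal G$ induced on $\{1,\dots,N\}$ (obtained by removing all edges between node $0$ and the other nodes) is undirected. For $i=1,\dots,N$ let $\bar{\mathcal N}_i=\{j:(j,i)\text{ is an edge of }\bar{\mathcal G}\}$. Consider the dynamic compensator, for $i=1,\dots,N$, $$\dot\eta_i=S(\omega_i)\eta_i+\mu_1 e_{vi},\qquad \dot\omega_i=\mu_2\,\phi(e_{vi})\,\eta_i,\qquad e_{vi}=\sum_{j\in\bar{\mathcal N}_i}(\eta_j-\eta_i),$$ where $\eta_0=v$, $\eta_i\in\mathbb{R}^m$, $\omega_i\in\mathbb{R}^l$, and $\mu_1,\mu_2>0$, and where for $x\in\mathbb{R}^m$, $\phi(x)\in\mathbb{R}^{l\times m}$ is the matrix whose $k$-th row has entry $-x_{2k}$ in column $2k-1$, $x_{2k-1}$ in column $2k$, and zeros elsewhere. Let $\eta=\mathrm{col}(\eta_1,\dots,\eta_N)$, $\tilde\eta_i=\eta_i-v$, $\tilde\eta=\mathrm{col}(\tilde\eta_1,\dots,\tilde\eta_N)$,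 $\tilde\omega_i=\omega_i-\omega$, $\tilde\omega=\mathrm{col}(\tilde\omega_1,\dots,\tilde\omega_N)$, and $S_d(\tilde\omega)=\mathrm{block\,diag}(S(\tilde\omega_1),\dots,S(\tilde\omega_N))$. Then for any $v(0)$, any $\eta(0)$ and $\omega_i(0)$, $i=1,\dots,N$, and any $\mu_1>0$, $\mu_2>0$, the solutions $\eta(t)$ and $\omega_i(t)$ exist and are bounded for all $t\ge0$, and $$\lim_{t\to\infty}\tilde\eta(t)=0,\qquad \lim_{t\to\infty}\dot{\tilde\omega}(t)=0,\qquad \lim_{t\to\infty}S_d(\tilde\omega(t))\eta(t)=0.$$
   Context: $\otimes$ is the Kronecker product; $\mathrm{col}(\cdot)$ stacks vectors into a column; $\mathrm{block\,diag}$ forms a block-diagonal matrix. The leader system matrix $S(\omega)$ is in the skew-symmetric form $\mathrm{diag}(\omega)\otimes a$ (all eigenvalues semi-simple with zero real part), but the vector $\omega$ is not used by the compensator. *)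

theory Defs
  imports "HOL-Analysis.Analysis"
begin

text \<open>Vectors in R^n are represented as functions nat => real, indexed 1..n;
  matrices as functions nat => nat => real, indexed 1-based.\<close>

definition kron :: "(nat \<Rightarrow> nat \<Rightarrow> real) \<Rightarrow> nat \<Rightarrow> nat \<Rightarrow> (nat \<Rightarrow> nat \<Rightarrow> real) \<Rightarrow> nat \<Rightarrow> nat \<Rightarrow> real" where
  "kron A r s B i j = A ((i - 1) div r + 1) ((j - 1) div s + 1) * B ((i - 1) mod r + 1) ((j - 1) mod s + 1)"
  \<comment> \<open>Kronecker product A \<otimes> B where B is an r x s matrix\<close>

definition diagm :: "(nat \<Rightarrow> real) \<Rightarrow> nat \<Rightarrow> nat \<Rightarrow> real" where
  "diagm z i j = (if i = j then z i else 0)"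

definition amat :: "nat \<Rightarrow> nat \<Rightarrow> real" where
  "amat i j = (if i = 1 \<and> j = 2 then 1 else if i = 2 \<and> j = 1 then -1 else 0)"

definition Smat :: "(nat \<Rightarrow> real) \<Rightarrow> nat \<Rightarrow> nat \<Rightarrow> real" where
  "Smat z = kron (diagm z) 2 2 amat"

definition mulv :: "(nat \<Rightarrow> nat \<Rightarrow> real) \<Rightarrow> nat \<Rightarrow> (nat \<Rightarrow> real) \<Rightarrow> nat \<Rightarrow> real" where
  "mulv M n x i = (\<Sum>j = 1..n. M i j * x j)"

definition phi :: "(nat \<Rightarrow> real) \<Rightarrow> nat \<Rightarrow> nat \<Rightarrow> real" where
  "phi x k j = (if j = 2 * k - 1 then - x (2 * k) else if j = 2 * k then x (2 * k - 1) else 0)"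

text \<open>Rooted spanning tree (arborescence) of a digraph with vertex set V; an edge (j,i) goes from j to i.\<close>
definition rooted_spanning_tree :: "nat \<Rightarrow> nat set \<Rightarrow> (nat \<times> nat) set \<Rightarrow> bool" where
  "rooted_spanning_tree r V T \<longleftrightarrow> T \<subseteq> V \<times> V \<and> r \<in> V \<and>
     (\<forall>j. (j, r) \<notin> T) \<and>
     (\<forall>i\<in>V. i \<noteq> r \<longrightarrow> (\<exists>!j. (j, i) \<in> T)) \<and>
     (\<forall>i\<in>V. (r, i) \<in> T\<^sup>*)"

definition contains_spanning_tree :: "(nat \<times> nat) set \<Rightarrow> nat set \<Rightarrow> nat \<Rightarrow> bool" where
  "contains_spanning_tree E V r \<longleftrightarrow> (\<exists>T \<subseteq> E. rooted_spanning_tree r V T)"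

definition nbrs :: "(nat \<times> nat) set \<Rightarrow> nat \<Rightarrow> nat \<Rightarrow> nat set" where
  "nbrs E N i = {j \<in> {0..N}. (j, i) \<in> E}"

definition closed_loop ::
  "nat \<Rightarrow> nat \<Rightarrow> (nat \<times> nat) set \<Rightarrow> (nat \<Rightarrow> real) \<Rightarrow> real \<Rightarrow> real \<Rightarrow>
   (real \<Rightarrow> nat \<Rightarrow> real) \<Rightarrow> (nat \<Rightarrow> real \<Rightarrow> nat \<Rightarrow> real) \<Rightarrow> (nat \<Rightarrow> real \<Rightarrow> nat \<Rightarrow> real) \<Rightarrow> bool" where
  "closed_loop N l E w mu1 mu2 v eta om \<longleftrightarrow>
    (let m = 2 * l;
         etab = (\<lambda>j t. if j = 0 then v t else eta j t);
         ev = (\<lambda>i t k. \<Sum>j\<in>nbrs E N i. etab j t k - eta i t k)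
     in (\<forall>t\<ge>0. \<forall>k\<in>{1..m}.
           ((\<lambda>s. v s k) has_real_derivative mulv (Smat w) m (v t) k) (at t within {0..})) \<and>
        (\<forall>i\<in>{1..N}. \<forall>t\<ge>0. \<forall>k\<in>{1..m}.
           ((\<lambda>s. eta i s k) has_real_derivative
              (mulv (Smat (om i t)) m (eta i t) k + mu1 * ev i t k)) (at t within {0..})) \<and>
        (\<forall>i\<in>{1..N}. \<forall>t\<ge>0. \<forall>k\<in>{1..l}.
           ((\<lambda>s. om i s k) has_real_derivative
              (mu2 * mulv (phi (ev i t)) m (eta i t) k)) (at t within {0..})))"

end

theory Submission
  imports Defs
begin


lemma deriv_within_sub:
  assumes "(f has_real_derivative d) (at t within {0..})" "T \<subseteq> {0..}"
  shows "(f has_real_derivative d) (at t within T)"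
  using assms has_field_derivative_subset by blast

lemma mvt0:
  fixes f :: "real \<Rightarrow> real"
  assumes "0 \<le> a" "a \<le> b"
    and "\<And>x. a \<le> x \<Longrightarrow> x \<le> b \<Longrightarrow> (f has_real_derivative f' x) (at x within {0..})"
  shows "\<exists>x. a \<le> x \<and> x \<le> b \<and> f b - f a = f' x * (b - a)"
proof -
  have "\<exists>x\<in>{a..b}. f b - f a = (\<lambda>h. h * f' x) (b - a)"
  proof (rule mvt_very_simple[OF assms(2)])
    fix x assume "a \<le> x" "x \<le> b"
    then have "(f has_real_derivative f' x) (at x within {a..b})"
      by (rule deriv_within_sub[OF assms(3)]) (use \<open>a \<le> x\<close> \<open>x \<le> b\<close> assms(1) in auto)
    then show "(f has_derivative (\<lambda>h. h * f' x)) (at x within {a..b})"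
      by (simp add: has_field_derivative_def mult_commute_abs)
  qed
  then show ?thesis by (auto simp: mult.commute)
qed
lemma lip_deriv:
  fixes f :: "real \<Rightarrow> real"
  assumes "\<And>x. 0 \<le> x \<Longrightarrow> (f has_real_derivative f' x) (at x within {0..})"
    and "\<And>x. 0 \<le> x \<Longrightarrow> \<bar>f' x\<bar> \<le> M"
    and "0 \<le> s" "0 \<le> t"
  shows "\<bar>f s - f t\<bar> \<le> M * \<bar>s - t\<bar>"
proof -
  have key: "\<bar>f b - f a\<bar> \<le> M * (b - a)" if h: "0 \<le> a" "a \<le> b" for a b
  proof -
    have "\<exists>x. a \<le> x \<and> x \<le> b \<and> f b - f a = f' x * (b - a)"
      by (rule mvt0[OF h]) (use assms(1) h in auto)
    then obtain x where x: "a \<le> x" "x \<le> b" "f b - f a = f' x * (b - a)" by blast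
    have "\<bar>f' x * (b - a)\<bar> = \<bar>f' x\<bar> * (b - a)" using that by (simp add: abs_mult)
    also have "\<dots> \<le> M * (b - a)" using assms(2)[of x] x that by (intro mult_right_mono) auto
    finally show ?thesis using x by simp
  qed
  show ?thesis
  proof (cases "s \<le> t")
    case True
    have "\<bar>f s - f t\<bar> = \<bar>f t - f s\<bar>" by (rule abs_minus_commute)
    moreover have "\<bar>s - t\<bar> = t - s" using True by simp
    ultimately show ?thesis using key[of s t] assms True by simp
  next
    case False then show ?thesis using key[of t s] assms by simp
  qed
qed

lemma nonincr_deriv:
  fixes f :: "real \<Rightarrow> real"
  assumes "\<And>x. 0 \<le> x \<Longrightarrow> (f has_real_derivative f' x) (at x within {0..})"
    and "\<And>x. 0 \<le> x \<Longrightarrow> f' x \<le> 0"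
    and "0 \<le> s" "s \<le> t"
  shows "f t \<le> f s"
proof -
  have "\<exists>x. s \<le> x \<and> x \<le> t \<and> f t - f s = f' x * (t - s)"
    by (rule mvt0[OF assms(3,4)]) (use assms(1) assms(3) in auto)
  then obtain x where x: "s \<le> x" "x \<le> t" "f t - f s = f' x * (t - s)" by blast
  have "f' x * (t - s) \<le> 0" using assms(2)[of x] x assms(3,4)
    by (simp add: mult_nonpos_nonneg)
  then show ?thesis using x by simp
qed


lemma barrier:
  fixes f :: "real \<Rightarrow> real"
  assumes der: "\<And>x. 0 \<le> x \<Longrightarrow> (f has_real_derivative f' x) (at x within {0..})"
    and neg: "\<And>x. 0 \<le> x \<Longrightarrow> f x \<le> c + 1 \<Longrightarrow> f' x \<le> 0"
    and f0: "f 0 \<le> c" and t: "0 \<le> t"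
  shows "f t \<le> c"
proof (rule ccontr)
  assume "\<not> f t \<le> c"
  then have ft: "f t > c" by simp
  have cont: "continuous_on {0..t} f"
  proof -
    have "\<forall>x\<in>{0..t}. continuous (at x within {0..t}) f"
    proof
      fix x assume x: "x \<in> {0..t}"
      have "(f has_real_derivative f' x) (at x within {0..t})"
        by (rule deriv_within_sub[OF der]) (use x in auto)
      then show "continuous (at x within {0..t}) f" by (rule DERIV_continuous)
    qed
    then show ?thesis by (simp add: continuous_on_eq_continuous_within)
  qed
  define A where "A = {x\<in>{0..t}. f x \<le> c}"
  have A_closed: "closed A"
    unfolding A_def using continuous_closed_preimage[OF cont closed_atLeastAtMost, of "{..c}"]
    by (simp add: vimage_def Int_def conj_commute)
  have "0 \<in> A" using f0 t by (simp add: A_def)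
  have A_bdd: "bdd_above A" unfolding A_def by (rule bdd_aboveI[of _ t]) auto
  define s where "s = Sup A"
  have sA: "s \<in> A" unfolding s_def using closed_contains_Sup[OF _ A_bdd A_closed] \<open>0 \<in> A\<close> by blast
  then have s0: "0 \<le> s" "s \<le> t" "f s \<le> c" by (auto simp: A_def)
  have st: "s < t" using s0 ft by (cases "s = t") auto
  have above: "f y > c" if "s < y" "y \<le> t" for y
  proof (rule ccontr)
    assume "\<not> f y > c"
    then have "y \<in> A" using that s0 by (auto simp: A_def)
    then have "y \<le> s" unfolding s_def by (rule cSup_upper[OF _ A_bdd])
    then show False using that by simp
  qed
  have "continuous (at s within {0..t}) f"
    using cont s0 by (simp add: continuous_on_eq_continuous_within)
  then have "\<forall>\<^sub>F y in at s within {0..t}. dist (f y) (f s) < 1"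
    unfolding continuous_within tendsto_iff by auto
  then obtain d where d0: "d > 0" and d1: "\<forall>y\<in>{0..t}. 0 < dist y s \<and> dist y s < d \<longrightarrow> dist (f y) (f s) < 1"
    unfolding eventually_at by auto
  have d: "d > 0" "\<And>y. y \<in> {0..t} \<Longrightarrow> 0 < dist y s \<Longrightarrow> dist y s < d \<Longrightarrow> dist (f y) (f s) < 1"
    using d0 d1 by auto
  define u where "u = min t (s + d / 2)"
  have u: "s < u" "u \<le> t" using st d by (auto simp: u_def)
  have fu_le: "f y \<le> c + 1" if "s \<le> y" "y \<le> u" for y
  proof (cases "y = s")
    case True then show ?thesis using s0 by simp
  next
    case False
    then have "dist (f y) (f s) < 1"
      using that u s0 d by (intro d(2)) (auto simp: dist_real_def u_def)
    then show ?thesis using s0 by (auto simp: dist_real_def)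
  qed
  have "f u \<le> f s"
  proof -
    have "\<exists>x. s \<le> x \<and> x \<le> u \<and> f u - f s = f' x * (u - s)"
      by (rule mvt0[OF s0(1)]) (use u der s0 in auto)
    then obtain x where x: "s \<le> x" "x \<le> u" "f u - f s = f' x * (u - s)" by blast
    have "f' x \<le> 0" using neg[of x] fu_le[of x] x s0 by auto
    then have "f' x * (u - s) \<le> 0" using u by (simp add: mult_nonpos_nonneg)
    then show ?thesis using x by simp
  qed
  moreover have "f u > c" using above u by auto
  ultimately show False using s0 by simp
qed

definition cauchy_at_top :: "(real \<Rightarrow> real) \<Rightarrow> bool" where
  "cauchy_at_top f \<longleftrightarrow> (\<forall>e>0. \<exists>T. \<forall>s t. T \<le> s \<longrightarrow> s \<le> t \<longrightarrow> \<bar>f t - f s\<bar> < e)"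

lemma tendsto_cauchy_at_top:
  assumes "(f \<longlongrightarrow> L) at_top"
  shows "cauchy_at_top f"
  unfolding cauchy_at_top_def
proof (intro allI impI)
  fix e :: real assume e: "e > 0"
  have e2: "e / 2 > 0" using e by simp
  have "\<forall>\<^sub>F x in at_top. dist (f x) L < e / 2" using assms[unfolded tendsto_iff] e2 by blast
  then obtain T where T: "\<And>x. x \<ge> T \<Longrightarrow> dist (f x) L < e / 2" by (auto simp: eventually_at_top_linorder)
  show "\<exists>T. \<forall>s t. T \<le> s \<longrightarrow> s \<le> t \<longrightarrow> \<bar>f t - f s\<bar> < e"
  proof (intro exI allI impI)
    fix s t assume "T \<le> s" "s \<le> t"
    then have "dist (f s) L < e/2" "dist (f t) L < e/2" using T by auto
    then show "\<bar>f t - f s\<bar> < e" unfolding dist_real_def by arith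
  qed
qed

lemma mono_cauchy_at_top:
  fixes f :: "real \<Rightarrow> real"
  assumes mono: "\<And>s t. 0 \<le> s \<Longrightarrow> s \<le> t \<Longrightarrow> f t \<le> f s"
    and lb: "\<And>t. 0 \<le> t \<Longrightarrow> 0 \<le> f t"
  shows "cauchy_at_top f"
  unfolding cauchy_at_top_def
proof (intro allI impI)
  fix e :: real assume e: "e > 0"
  define L where "L = Inf (f ` {0..})"
  have bdd: "bdd_below (f ` {0..})" using lb by (intro bdd_belowI[of _ 0]) auto
  have ne: "f ` {0..} \<noteq> {}" by auto
  have "\<exists>y\<in>f ` {0..}. y < L + e" unfolding L_def using cInf_lessD[OF ne, of "L + e"] e L_def by auto
  then obtain T where T: "0 \<le> T" "f T < L + e" by auto
  show "\<exists>T. \<forall>s t. T \<le> s \<longrightarrow> s \<le> t \<longrightarrow> \<bar>f t - f s\<bar> < e"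
  proof (intro exI allI impI)
    fix s t assume st: "T \<le> s" "s \<le> t"
    have "L \<le> f t" unfolding L_def using st T by (intro cInf_lower[OF _ bdd]) auto
    moreover have "f t \<le> f s" using mono st T by auto
    moreover have "f s \<le> f T" using mono st T by auto
    ultimately show "\<bar>f t - f s\<bar> < e" using T by auto
  qed
qed

lemma barbalat:
  fixes f :: "real \<Rightarrow> real"
  assumes der: "\<And>x. 0 \<le> x \<Longrightarrow> (f has_real_derivative f' x) (at x within {0..})"
    and cau: "cauchy_at_top f"
    and lip: "\<And>s t. 0 \<le> s \<Longrightarrow> 0 \<le> t \<Longrightarrow> \<bar>f' s - f' t\<bar> \<le> K * \<bar>s - t\<bar>"
  shows "(f' \<longlongrightarrow> 0) at_top"
proof -
  define K' where "K' = max K 0 + 1"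
  have K': "K' > 0" "K \<le> K'" by (auto simp: K'_def)
  have lip': "\<bar>f' s - f' t\<bar> \<le> K' * \<bar>s - t\<bar>" if "0 \<le> s" "0 \<le> t" for s t
    using lip[OF that] K' by (meson abs_ge_zero mult_right_mono order_trans)
  show ?thesis
    unfolding tendsto_iff
  proof (intro allI impI)
    fix e :: real assume e: "e > 0"
    define d where "d = e / (2 * K')"
    have d: "d > 0" "K' * d = e / 2" using e K' by (auto simp: d_def)
    obtain T where T: "\<And>s t. T \<le> s \<Longrightarrow> s \<le> t \<Longrightarrow> \<bar>f t - f s\<bar> < e * d / 2"
      using cau e d unfolding cauchy_at_top_def by (meson mult_pos_pos half_gt_zero)
    show "\<forall>\<^sub>F x in at_top. dist (f' x) 0 < e"
      unfolding eventually_at_top_linorder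
    proof (intro exI allI impI)
      fix t assume t: "max T 0 \<le> t"
      show "dist (f' t) 0 < e"
      proof (rule ccontr)
        assume "\<not> dist (f' t) 0 < e"
        then have big: "\<bar>f' t\<bar> \<ge> e" by simp
        have "\<exists>x. t \<le> x \<and> x \<le> t + d \<and> f (t + d) - f t = f' x * (t + d - t)"
          by (rule mvt0) (use t d der in auto)
        then obtain x where x: "t \<le> x" "x \<le> t + d" "f (t + d) - f t = f' x * d" by auto
        have "\<bar>f' x - f' t\<bar> \<le> K' * \<bar>x - t\<bar>" using t x by (intro lip') auto
        also have "\<dots> \<le> K' * d" using x K' by (intro mult_left_mono) auto
        finally have "\<bar>f' x - f' t\<bar> \<le> e / 2" using d by simp
        then have "\<bar>f' x\<bar> \<ge> e / 2" using big by linarith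
        then have "\<bar>f' x\<bar> * d \<ge> e / 2 * d" using d by (intro mult_right_mono) auto
        then have "\<bar>f (t + d) - f t\<bar> \<ge> e * d / 2" using x d by (simp add: abs_mult)
        moreover have "\<bar>f (t + d) - f t\<bar> < e * d / 2" using T[of t "t + d"] t d by auto
        ultimately show False by simp
      qed
    qed
  qed
qed


lemma indef_deriv:
  fixes g :: "real \<Rightarrow> real"
  assumes "continuous_on {0..} g" "0 \<le> t"
  shows "((\<lambda>u. integral {0..u} g) has_real_derivative g t) (at t within {0..})"
proof -
  have "((\<lambda>u. integral {0..u} g) has_real_derivative g t) (at t within {0..t+1})"
    by (rule integral_has_real_derivative) (use assms in \<open>auto intro: continuous_on_subset\<close>)
  moreover have "at t within {0..t+1} = at t within {0..}"
    by (rule at_within_nhd[of _ "{..<t+1}"]) auto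
  ultimately show ?thesis by simp
qed

lemma integral_pow:
  assumes "0 \<le> t"
  shows "integral {0..t} (\<lambda>s::real. s ^ n) = t ^ Suc n / Suc n"
proof -
  have "((\<lambda>s::real. s ^ n) has_integral (t ^ Suc n / Suc n - 0 ^ Suc n / Suc n)) {0..t}"
  proof (rule fundamental_theorem_of_calculus)
    show "0 \<le> t" by fact
    fix x :: real assume "x \<in> {0..t}"
    have "((\<lambda>x. x ^ Suc n / Suc n) has_real_derivative x ^ n) (at x within {0..t})"
      by (rule derivative_eq_intros refl | simp)+
    then show "((\<lambda>x. x ^ Suc n / Suc n) has_vector_derivative x ^ n) (at x within {0..t})"
      by (simp add: has_real_derivative_iff_has_vector_derivative)
  qed
  then show ?thesis by (simp add: integral_unique)
qed

lemma F_cont: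
  fixes F :: "('a \<Rightarrow> real) \<Rightarrow> 'a \<Rightarrow> real"
  assumes lip: "\<And>x y. \<bar>F x k - F y k\<bar> \<le> L * (\<Sum>j\<in>D. \<bar>x j - y j\<bar>)"
    and cont: "\<And>j. j \<in> D \<Longrightarrow> continuous_on S (\<lambda>s. Y s j)"
  shows "continuous_on S (\<lambda>s. F (Y s) k)"
  unfolding continuous_on_def
proof
  fix x assume x: "x \<in> S"
  have "((\<lambda>s. F (Y s) k - F (Y x) k) \<longlongrightarrow> 0) (at x within S)"
  proof (rule Lim_null_comparison)
    show "\<forall>\<^sub>F s in at x within S. norm (F (Y s) k - F (Y x) k) \<le> L * (\<Sum>j\<in>D. \<bar>Y s j - Y x j\<bar>)"
      using lip by simp
    have "((\<lambda>s. L * (\<Sum>j\<in>D. \<bar>Y s j - Y x j\<bar>)) \<longlongrightarrow> L * (\<Sum>j\<in>D. \<bar>Y x j - Y x j\<bar>)) (at x within S)"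
      using cont x by (intro tendsto_intros) (auto simp: continuous_on_def)
    then show "((\<lambda>s. L * (\<Sum>j\<in>D. \<bar>Y s j - Y x j\<bar>)) \<longlongrightarrow> 0) (at x within S)" by simp
  qed
  then show "((\<lambda>s. F (Y s) k) \<longlongrightarrow> F (Y x) k) (at x within S)"
    by (rule LIM_zero_cancel)
qed

primrec picard_it :: "(('a \<Rightarrow> real) \<Rightarrow> 'a \<Rightarrow> real) \<Rightarrow> ('a \<Rightarrow> real) \<Rightarrow> nat \<Rightarrow> real \<Rightarrow> 'a \<Rightarrow> real" where
  "picard_it F x0 0 = (\<lambda>t. x0)"
| "picard_it F x0 (Suc n) = (\<lambda>t k. x0 k + integral {0..t} (\<lambda>s. F (picard_it F x0 n s) k))"

lemma deriv_within_cont: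
  assumes "\<And>t. 0 \<le> t \<Longrightarrow> (f has_real_derivative f' t) (at t within {0..})"
  shows "continuous_on {0..} f"
  unfolding continuous_on_eq_continuous_within
proof
  fix x :: real assume "x \<in> {0..}"
  then have "(f has_real_derivative f' x) (at x within {0..})" using assms by auto
  then show "continuous (at x within {0..}) f" by (rule DERIV_continuous)
qed

lemma lip_cont:
  fixes f :: "real \<Rightarrow> real"
  assumes "\<And>s t. s \<in> S \<Longrightarrow> t \<in> S \<Longrightarrow> \<bar>f s - f t\<bar> \<le> M * \<bar>s - t\<bar>"
  shows "continuous_on S f"
  unfolding continuous_on_def
proof
  fix x assume x: "x \<in> S"
  have "((\<lambda>s. f s - f x) \<longlongrightarrow> 0) (at x within S)"
  proof (rule Lim_null_comparison)
    show "\<forall>\<^sub>F s in at x within S. norm (f s - f x) \<le> M * \<bar>s - x\<bar>"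
      using assms x by (auto simp: eventually_at_filter)
    have "((\<lambda>s. M * \<bar>s - x\<bar>) \<longlongrightarrow> M * \<bar>x - x\<bar>) (at x within S)"
      by (intro tendsto_intros)
    then show "((\<lambda>s. M * \<bar>s - x\<bar>) \<longlongrightarrow> 0) (at x within S)" by simp
  qed
  then show "(f \<longlongrightarrow> f x) (at x within S)" by (rule LIM_zero_cancel)
qed

lemma picard:
  fixes F :: "('a \<Rightarrow> real) \<Rightarrow> 'a \<Rightarrow> real" and D :: "'a set"
  assumes fin: "finite D" and L: "0 \<le> L"
    and bnd: "\<And>x k. k \<in> D \<Longrightarrow> \<bar>F x k\<bar> \<le> M"
    and lip: "\<And>x y k. k \<in> D \<Longrightarrow> \<bar>F x k - F y k\<bar> \<le> L * (\<Sum>j\<in>D. \<bar>x j - y j\<bar>)"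
  shows "\<exists>X. X 0 = x0 \<and>
     (\<forall>t\<ge>0. \<forall>k\<in>D. ((\<lambda>s. X s k) has_real_derivative F (X t) k) (at t within {0..}))"
proof -
  define P where "P = picard_it F x0"
  have P0: "P 0 t = x0" for t by (simp add: P_def)
  have PS: "P (Suc n) t k = x0 k + integral {0..t} (\<lambda>s. F (P n s) k)" for n t k by (simp add: P_def)
  have cont: "\<forall>k\<in>D. continuous_on {0..} (\<lambda>t. P n t k)" for n
  proof (induction n)
    case 0 then show ?case by (simp add: P0)
  next
    case (Suc n)
    show ?case
    proof
      fix k assume k: "k \<in> D"
      have c: "continuous_on {0..} (\<lambda>s. F (P n s) k)"
        using Suc k by (intro F_cont[OF lip]) auto
      have "((\<lambda>t. P (Suc n) t k) has_real_derivative F (P n t) k) (at t within {0..})" if "0 \<le> t" for t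
        unfolding PS by (rule DERIV_cong[OF DERIV_add[OF DERIV_const indef_deriv[OF c that]]]) simp
      then show "continuous_on {0..} (\<lambda>t. P (Suc n) t k)" by (rule deriv_within_cont)
    qed
  qed
  have contF: "continuous_on {0..} (\<lambda>s. F (P n s) k)" if "k \<in> D" for n k
    using cont that by (intro F_cont[OF lip]) auto
  have derP: "((\<lambda>t. P (Suc n) t k) has_real_derivative F (P n t) k) (at t within {0..})"
    if "k \<in> D" "0 \<le> t" for n k t
    unfolding PS by (rule DERIV_cong[OF DERIV_add[OF DERIV_const indef_deriv[OF contF[OF that(1)] that(2)]]]) simp
  have intF: "(\<lambda>s. F (P n s) k) integrable_on {0..t}" if "k \<in> D" for n k t
    by (rule integrable_continuous_interval) (rule continuous_on_subset[OF contF[OF that]], auto)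
  define c where "c = L * card D"
  have c0: "0 \<le> c" using L by (simp add: c_def)
  have bound: "\<bar>P (Suc n) t k - P n t k\<bar> \<le> M * c ^ n * t ^ Suc n / fact (Suc n)"
    if "0 \<le> t" "k \<in> D" for n t k
    using that
  proof (induction n arbitrary: t k)
    case 0
    have "\<bar>P (Suc 0) t k - P 0 t k\<bar> = \<bar>integral {0..t} (\<lambda>s. F x0 k)\<bar>" by (simp add: PS P0)
    also have "\<dots> = t * \<bar>F x0 k\<bar>" using 0(1) by (simp add: content_real abs_mult)
    also have "\<dots> \<le> t * M" using mult_left_mono[OF bnd[OF 0(2), of x0] 0(1)] .
    finally show ?case by (simp add: mult.commute)
  next
    case (Suc n)
    have "P (Suc (Suc n)) t k - P (Suc n) t k = integral {0..t} (\<lambda>s. F (P (Suc n) s) k - F (P n s) k)"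
      by (simp add: PS integral_diff[OF intF[OF Suc(3)] intF[OF Suc(3)]])
    also have "\<bar>\<dots>\<bar> \<le> integral {0..t} (\<lambda>s. M * c ^ Suc n * s ^ Suc n / fact (Suc n))"
    proof (rule integral_norm_bound_integral[where 'n=real and 'a=real, simplified])
      show "(\<lambda>s. F (P (Suc n) s) k - F (P n s) k) integrable_on {0..t}"
        by (intro integrable_diff intF Suc(3))
      show "(\<lambda>s. M * c ^ Suc n * s ^ Suc n / fact (Suc n)) integrable_on {0..t}"
        by (intro integrable_continuous_interval continuous_intros) auto
      fix s assume s: "s \<in> {0..t}"
      have "\<bar>F (P (Suc n) s) k - F (P n s) k\<bar> \<le> L * (\<Sum>j\<in>D. \<bar>P (Suc n) s j - P n s j\<bar>)"
        by (rule lip[OF Suc(3)])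
      also have "\<dots> \<le> L * (\<Sum>j\<in>D. M * c ^ n * s ^ Suc n / fact (Suc n))"
        using s by (intro mult_left_mono[OF _ L] sum_mono Suc.IH) auto
      also have "\<dots> = M * c ^ Suc n * s ^ Suc n / fact (Suc n)"
        by (simp add: c_def)
      finally show "\<bar>F (P (Suc n) s) k - F (P n s) k\<bar> \<le> M * c ^ Suc n * s ^ Suc n / fact (Suc n)" .
    qed
    also have "\<dots> = M * c ^ Suc n / fact (Suc n) * integral {0..t} (\<lambda>s. s ^ Suc n)"
      by (simp add: mult.commute)
    also have "\<dots> = M * c ^ Suc n * t ^ Suc (Suc n) / fact (Suc (Suc n))"
      unfolding integral_pow[OF Suc(2)] by (simp add: field_simps)
    finally show ?case .
  qed
  have M0: "0 \<le> M" if "k \<in> D" for k using bnd[OF that, of x0] by simp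
  have conv: "convergent (\<lambda>n. P n t k)" if "0 \<le> t" "k \<in> D" for t k
  proof -
    define f where "f n = P (Suc n) t k - P n t k" for n
    have "summable f"
    proof (rule summable_comparison_test)
      show "\<exists>N. \<forall>n\<ge>N. norm (f n) \<le> M * t * (inverse (fact n) * (c * t) ^ n)"
      proof (intro exI allI impI)
        fix n :: nat
        have "norm (f n) \<le> M * c ^ n * t ^ Suc n / fact (Suc n)"
          using bound[OF that] by (simp add: f_def)
        also have "\<dots> \<le> M * c ^ n * t ^ Suc n / fact n"
          using M0[OF that(2)] c0 that(1)
          by (intro divide_left_mono) (auto intro: fact_mono)
        also have "\<dots> = M * t * (inverse (fact n) * (c * t) ^ n)"
          by (simp add: power_mult_distrib field_simps)
        finally show "norm (f n) \<le> M * t * (inverse (fact n) * (c * t) ^ n)" .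
      qed
      show "summable (\<lambda>n. M * t * (inverse (fact n) * (c * t) ^ n))"
        by (intro summable_mult summable_exp)
    qed
    then have "(\<lambda>n. \<Sum>i<n. f i) \<longlonglongrightarrow> suminf f" by (rule summable_LIMSEQ)
    moreover have "(\<Sum>i<n. f i) = P n t k - x0 k" for n
      unfolding f_def using sum_lessThan_telescope[of "\<lambda>i. P i t k" n] by (simp add: P0)
    ultimately have "(\<lambda>n. P n t k - x0 k) \<longlonglongrightarrow> suminf f" by simp
    then have "(\<lambda>n. P n t k - x0 k + x0 k) \<longlonglongrightarrow> suminf f + x0 k" by (intro tendsto_intros)
    then show ?thesis by (auto simp: convergent_def)
  qed
  define X where "X t k = lim (\<lambda>n. P n t k)" for t k
  have lim: "(\<lambda>n. P n t k) \<longlonglongrightarrow> X t k" if "0 \<le> t" "k \<in> D" for t k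
    using conv[OF that] unfolding X_def by (simp add: convergent_LIMSEQ_iff)
  have lipP: "\<bar>P (Suc n) s k - P (Suc n) t k\<bar> \<le> M * \<bar>s - t\<bar>"
    if "0 \<le> s" "0 \<le> t" "k \<in> D" for n s t k
    by (rule lip_deriv[OF derP[OF that(3)] bnd[OF that(3)] that(1,2)])
  have lipX: "\<bar>X s k - X t k\<bar> \<le> M * \<bar>s - t\<bar>"
    if "0 \<le> s" "0 \<le> t" "k \<in> D" for s t k
  proof -
    have "(\<lambda>n. \<bar>P (Suc n) s k - P (Suc n) t k\<bar>) \<longlonglongrightarrow> \<bar>X s k - X t k\<bar>"
      using LIMSEQ_Suc[OF lim[OF that(1,3)]] LIMSEQ_Suc[OF lim[OF that(2,3)]]
      by (intro tendsto_intros)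
    then show ?thesis
      using lipP[OF that] by (intro LIMSEQ_le_const2) auto
  qed
  have contX: "continuous_on {0..} (\<lambda>s. X s k)" if "k \<in> D" for k
    by (rule lip_cont[of _ _ M]) (use lipX that in auto)
  have contFX: "continuous_on {0..} (\<lambda>s. F (X s) k)" if "k \<in> D" for k
    using contX by (intro F_cont[where F=F and k=k, OF lip[OF that]]) auto
  have inteq: "X t k = x0 k + integral {0..t} (\<lambda>s. F (X s) k)" if "0 \<le> t" "k \<in> D" for t k
  proof -
    have dc: "(\<lambda>n. integral {0..t} (\<lambda>s. F (P n s) k)) \<longlonglongrightarrow> integral {0..t} (\<lambda>s. F (X s) k)"
    proof (rule dominated_convergence(2)[where h="\<lambda>s. M"])
      show "(\<lambda>s. F (P n s) k) integrable_on {0..t}" for n by (rule intF[OF that(2)])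
      show "(\<lambda>s. M) integrable_on {0..t}" by (rule integrable_const_ivl)
      show "norm (F (P n s) k) \<le> M" if "s \<in> {0..t}" for n s using bnd[OF \<open>k \<in> D\<close>] by simp
      fix s assume s: "s \<in> {0..t}"
      have "((\<lambda>n. F (P n s) k - F (X s) k) \<longlonglongrightarrow> 0)"
      proof (rule Lim_null_comparison)
        show "\<forall>\<^sub>F n in sequentially. norm (F (P n s) k - F (X s) k) \<le> L * (\<Sum>j\<in>D. \<bar>P n s j - X s j\<bar>)"
          using lip[OF that(2)] by simp
        have "(\<lambda>n. L * (\<Sum>j\<in>D. \<bar>P n s j - X s j\<bar>)) \<longlonglongrightarrow> L * (\<Sum>j\<in>D. \<bar>X s j - X s j\<bar>)"
          using lim s by (intro tendsto_intros) auto
        then show "(\<lambda>n. L * (\<Sum>j\<in>D. \<bar>P n s j - X s j\<bar>)) \<longlonglongrightarrow> 0" by simp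
      qed
      then show "(\<lambda>n. F (P n s) k) \<longlonglongrightarrow> F (X s) k" by (rule LIM_zero_cancel)
    qed
    have "(\<lambda>n. P (Suc n) t k) \<longlonglongrightarrow> x0 k + integral {0..t} (\<lambda>s. F (X s) k)"
      unfolding PS by (intro tendsto_intros dc)
    moreover have "(\<lambda>n. P (Suc n) t k) \<longlonglongrightarrow> X t k" using LIMSEQ_Suc[OF lim[OF that]] by simp
    ultimately show ?thesis using LIMSEQ_unique by blast
  qed
  show ?thesis
  proof (intro exI conjI ballI allI impI)
    have "P n 0 k = x0 k" for n k by (cases n) (simp_all add: P0 PS)
    then show "X 0 = x0" unfolding X_def by (simp add: fun_eq_iff)
  next
    fix t :: real and k assume t: "0 \<le> t" and k: "k \<in> D"
    have d: "((\<lambda>s. x0 k + integral {0..s} (\<lambda>u. F (X u) k)) has_real_derivative F (X t) k) (at t within {0..})"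
      by (rule DERIV_cong[OF DERIV_add[OF DERIV_const indef_deriv[OF contFX[OF k] t]]]) simp
    show "((\<lambda>s. X s k) has_real_derivative F (X t) k) (at t within {0..})"
      by (rule has_field_derivative_transform_within[OF d zero_less_one]) (use t inteq k in auto)
  qed
qed


lemma Smat_entry:
  assumes "1 \<le> k" "1 \<le> j"
  shows "Smat z k j * x j =
    (if j = k + 1 then (if odd k then z ((k+1) div 2) * x (k + 1) else 0) else 0) +
    (if j = k - 1 then (if even k then - (z (k div 2) * x (k - 1)) else 0) else 0)"
proof -
  have "k = 2 * ((k-1) div 2) + 1 \<or> k = 2 * ((k-1) div 2) + 2" using assms(1) by presburger
  then obtain a where a: "k = 2 * a + 1 \<or> k = 2 * a + 2" by blast
  have "j = 2 * ((j-1) div 2) + 1 \<or> j = 2 * ((j-1) div 2) + 2" using assms(2) by presburger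
  then obtain b where b: "j = 2 * b + 1 \<or> j = 2 * b + 2" by blast
  show ?thesis
    using a b unfolding Smat_def kron_def diagm_def amat_def
    by (elim disjE; auto simp: algebra_simps; presburger)
qed

lemma mulv_Smat:
  assumes "k \<in> {1..2*l}"
  shows "mulv (Smat z) (2*l) x k = (if odd k then z ((k+1) div 2) * x (k + 1) else - (z (k div 2) * x (k - 1)))"
proof -
  have "mulv (Smat z) (2*l) x k = (\<Sum>j=1..2*l. (if j = k + 1 then (if odd k then z ((k+1) div 2) * x (k + 1) else 0) else 0) +
    (if j = k - 1 then (if even k then - (z (k div 2) * x (k - 1)) else 0) else 0))"
    unfolding mulv_def using assms by (intro sum.cong refl Smat_entry) auto
  also have "\<dots> = (if odd k then z ((k+1) div 2) * x (k + 1) else - (z (k div 2) * x (k - 1)))"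
  proof (cases "odd k")
    case True
    then have "k + 1 \<in> {1..2*l}" using assms by (auto; presburger)
    moreover have "k - 1 \<noteq> k + 1" by arith
    ultimately show ?thesis using True by (simp add: sum.distrib)
  next
    case False
    then have "k - 1 \<in> {1..2*l}" using assms by (auto; presburger)
    moreover have "k - 1 \<noteq> k + 1" by arith
    ultimately show ?thesis using False by (simp add: sum.distrib)
  qed
  finally show ?thesis .
qed

lemma mulv_phi:
  assumes "q \<in> {1..l}"
  shows "mulv (phi e) (2*l) x q = e (2*q-1) * x (2*q) - e (2*q) * x (2*q-1)"
proof -
  have "mulv (phi e) (2*l) x q = (\<Sum>j=1..2*l. (if j = 2*q-1 then - e (2*q) * x (2*q-1) else 0) + (if j = 2*q then e (2*q-1) * x (2*q) else 0))"
    unfolding mulv_def phi_def using assms by (intro sum.cong refl) auto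
  also have "\<dots> = e (2*q-1) * x (2*q) - e (2*q) * x (2*q-1)"
  proof -
    have "2*q - 1 \<in> {1..2*l}" "2*q \<in> {1..2*l}" "2*q - 1 \<noteq> 2*q" using assms by auto
    then show ?thesis by (simp add: sum.distrib)
  qed
  finally show ?thesis .
qed


definition inbox :: "'a set \<Rightarrow> real \<Rightarrow> ('a \<Rightarrow> real) \<Rightarrow> bool" where
  "inbox D R x \<longleftrightarrow> (\<forall>j\<in>D. \<bar>x j\<bar> \<le> R)"

definition good :: "'a set \<Rightarrow> (('a \<Rightarrow> real) \<Rightarrow> real) \<Rightarrow> bool" where
  "good D f \<longleftrightarrow> (\<forall>R. \<exists>M L. 0 \<le> L \<and> (\<forall>x y. inbox D R x \<longrightarrow> inbox D R y \<longrightarrow>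
      \<bar>f x\<bar> \<le> M \<and> \<bar>f x - f y\<bar> \<le> L * (\<Sum>j\<in>D. \<bar>x j - y j\<bar>)))"

lemma goodE:
  assumes "good D f"
  obtains M L where "0 \<le> L" "\<And>x y. inbox D R x \<Longrightarrow> inbox D R y \<Longrightarrow>
      \<bar>f x\<bar> \<le> M \<and> \<bar>f x - f y\<bar> \<le> L * (\<Sum>j\<in>D. \<bar>x j - y j\<bar>)"
proof -
  have "\<exists>M L. 0 \<le> L \<and> (\<forall>x y. inbox D R x \<longrightarrow> inbox D R y \<longrightarrow>
      \<bar>f x\<bar> \<le> M \<and> \<bar>f x - f y\<bar> \<le> L * (\<Sum>j\<in>D. \<bar>x j - y j\<bar>))"
    using assms unfolding good_def by (rule spec)
  then obtain M L where "0 \<le> L" and H: "\<forall>x y. inbox D R x \<longrightarrow> inbox D R y \<longrightarrow>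
      \<bar>f x\<bar> \<le> M \<and> \<bar>f x - f y\<bar> \<le> L * (\<Sum>j\<in>D. \<bar>x j - y j\<bar>)" by blast
  show thesis by (rule that[OF \<open>0 \<le> L\<close>]) (use H in blast)
qed

lemma good_const: "good D (\<lambda>x. c)"
  unfolding good_def
proof
  fix R :: real
  show "\<exists>M L. 0 \<le> L \<and> (\<forall>x y. inbox D R x \<longrightarrow> inbox D R y \<longrightarrow>
      \<bar>c\<bar> \<le> M \<and> \<bar>c - c\<bar> \<le> L * (\<Sum>j\<in>D. \<bar>x j - y j\<bar>))"
    by (rule exI[of _ "\<bar>c\<bar>"], rule exI[of _ 0]) simp
qed

lemma good_coord:
  assumes "finite D" "j \<in> D"
  shows "good D (\<lambda>x. x j)"
  unfolding good_def
proof
  fix R :: real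
  show "\<exists>M L. 0 \<le> L \<and> (\<forall>x y. inbox D R x \<longrightarrow> inbox D R y \<longrightarrow>
      \<bar>x j\<bar> \<le> M \<and> \<bar>x j - y j\<bar> \<le> L * (\<Sum>j\<in>D. \<bar>x j - y j\<bar>))"
  proof (rule exI[of _ R], rule exI[of _ 1], intro conjI allI impI)
    fix x y :: "'a \<Rightarrow> real" assume "inbox D R x" "inbox D R y"
    then show "\<bar>x j\<bar> \<le> R" using assms(2) by (simp add: inbox_def)
    have "\<bar>x j - y j\<bar> \<le> (\<Sum>j\<in>D. \<bar>x j - y j\<bar>)"
      by (rule member_le_sum[OF assms(2)]) (use assms(1) in auto)
    then show "\<bar>x j - y j\<bar> \<le> 1 * (\<Sum>j\<in>D. \<bar>x j - y j\<bar>)" by simp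
  qed simp
qed

lemma good_add:
  assumes "good D f" "good D g"
  shows "good D (\<lambda>x. f x + g x)"
  unfolding good_def
proof
  fix R
  obtain M1 L1 where 1: "0 \<le> L1" "\<And>x y. inbox D R x \<Longrightarrow> inbox D R y \<Longrightarrow>
      \<bar>f x\<bar> \<le> M1 \<and> \<bar>f x - f y\<bar> \<le> L1 * (\<Sum>j\<in>D. \<bar>x j - y j\<bar>)" using goodE[OF assms(1), where R=R] by metis
  obtain M2 L2 where 2: "0 \<le> L2" "\<And>x y. inbox D R x \<Longrightarrow> inbox D R y \<Longrightarrow>
      \<bar>g x\<bar> \<le> M2 \<and> \<bar>g x - g y\<bar> \<le> L2 * (\<Sum>j\<in>D. \<bar>x j - y j\<bar>)" using goodE[OF assms(2), where R=R] by metis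
  show "\<exists>M L. 0 \<le> L \<and> (\<forall>x y. inbox D R x \<longrightarrow> inbox D R y \<longrightarrow>
      \<bar>f x + g x\<bar> \<le> M \<and> \<bar>f x + g x - (f y + g y)\<bar> \<le> L * (\<Sum>j\<in>D. \<bar>x j - y j\<bar>))"
  proof (rule exI[of _ "M1 + M2"], rule exI[of _ "L1 + L2"], intro conjI allI impI)
    fix x y assume xy: "inbox D R x" "inbox D R y"
    show "\<bar>f x + g x\<bar> \<le> M1 + M2" using abs_triangle_ineq[of "f x" "g x"] 1(2)[OF xy] 2(2)[OF xy] by linarith
    have eq: "f x + g x - (f y + g y) = (f x - f y) + (g x - g y)" by simp
    show "\<bar>f x + g x - (f y + g y)\<bar> \<le> (L1 + L2) * (\<Sum>j\<in>D. \<bar>x j - y j\<bar>)"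
      unfolding eq distrib_right using abs_triangle_ineq[of "f x - f y" "g x - g y"] 1(2)[OF xy] 2(2)[OF xy] by linarith
  qed (use 1 2 in auto)
qed

lemma good_mult:
  assumes "good D f" "good D g"
  shows "good D (\<lambda>x. f x * g x)"
  unfolding good_def
proof
  fix R
  obtain M1 L1 where 1: "0 \<le> L1" "\<And>x y. inbox D R x \<Longrightarrow> inbox D R y \<Longrightarrow>
      \<bar>f x\<bar> \<le> M1 \<and> \<bar>f x - f y\<bar> \<le> L1 * (\<Sum>j\<in>D. \<bar>x j - y j\<bar>)" using goodE[OF assms(1), where R=R] by metis
  obtain M2 L2 where 2: "0 \<le> L2" "\<And>x y. inbox D R x \<Longrightarrow> inbox D R y \<Longrightarrow>
      \<bar>g x\<bar> \<le> M2 \<and> \<bar>g x - g y\<bar> \<le> L2 * (\<Sum>j\<in>D. \<bar>x j - y j\<bar>)" using goodE[OF assms(2), where R=R] by metis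
  define M1' where "M1' = max M1 0"
  define M2' where "M2' = max M2 0"
  show "\<exists>M L. 0 \<le> L \<and> (\<forall>x y. inbox D R x \<longrightarrow> inbox D R y \<longrightarrow>
      \<bar>f x * g x\<bar> \<le> M \<and> \<bar>f x * g x - f y * g y\<bar> \<le> L * (\<Sum>j\<in>D. \<bar>x j - y j\<bar>))"
  proof (rule exI[of _ "M1' * M2'"], rule exI[of _ "M1' * L2 + M2' * L1"], intro conjI allI impI)
    show "0 \<le> M1' * L2 + M2' * L1" using 1 2 by (simp add: M1'_def M2'_def)
    fix x y assume xy: "inbox D R x" "inbox D R y"
    define S where "S = (\<Sum>j\<in>D. \<bar>x j - y j\<bar>)"
    have S0: "0 \<le> S" unfolding S_def by (intro sum_nonneg) auto
    have a: "\<bar>f x\<bar> \<le> M1'" "\<bar>g y\<bar> \<le> M2'" "\<bar>g x\<bar> \<le> M2'"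
      using 1(2)[OF xy] 2(2)[OF xy] 2(2)[OF xy(2) xy(1)] by (auto simp: M1'_def M2'_def)
    have b: "\<bar>f x - f y\<bar> \<le> L1 * S" "\<bar>g x - g y\<bar> \<le> L2 * S"
      using 1(2)[OF xy] 2(2)[OF xy] by (auto simp: S_def)
    show "\<bar>f x * g x\<bar> \<le> M1' * M2'" unfolding abs_mult using a by (intro mult_mono) auto
    have "f x * g x - f y * g y = f x * (g x - g y) + g y * (f x - f y)" by (simp add: algebra_simps)
    moreover have "\<bar>f x * (g x - g y) + g y * (f x - f y)\<bar> \<le> \<bar>f x * (g x - g y)\<bar> + \<bar>g y * (f x - f y)\<bar>"
      by (rule abs_triangle_ineq)
    ultimately have "\<bar>f x * g x - f y * g y\<bar> \<le> \<bar>f x\<bar> * \<bar>g x - g y\<bar> + \<bar>g y\<bar> * \<bar>f x - f y\<bar>"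
      by (simp only: abs_mult)
    also have "\<dots> \<le> M1' * (L2 * S) + M2' * (L1 * S)"
      using a b by (intro add_mono mult_mono) auto
    finally show "\<bar>f x * g x - f y * g y\<bar> \<le> (M1' * L2 + M2' * L1) * S"
      by (simp add: algebra_simps)
  qed
qed

lemma good_cmult: "good D f \<Longrightarrow> good D (\<lambda>x. c * f x)"
  using good_mult[OF good_const] by blast

lemma good_uminus: "good D f \<Longrightarrow> good D (\<lambda>x. - f x)"
  using good_cmult[of D f "-1"] by simp

lemma good_diff: "good D f \<Longrightarrow> good D g \<Longrightarrow> good D (\<lambda>x. f x - g x)"
  using good_add[of D f "\<lambda>x. - g x"] good_uminus[of D g] by simp

lemma good_if: "good D f \<Longrightarrow> good D g \<Longrightarrow> good D (\<lambda>x. if c then f x else g x)"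
  by (cases c) auto

lemma good_sum:
  assumes "finite A" "\<And>a. a \<in> A \<Longrightarrow> good D (f a)"
  shows "good D (\<lambda>x. \<Sum>a\<in>A. f a x)"
  using assms
proof (induction A rule: finite_induct)
  case empty then show ?case by (simp add: good_const)
next
  case (insert a A)
  then show ?case by (simp add: good_add)
qed


lemma good_unif:
  assumes "finite K" "\<And>k. k \<in> K \<Longrightarrow> good D (f k)"
  shows "\<exists>M L. 0 \<le> L \<and> (\<forall>k\<in>K. \<forall>x y. inbox D R x \<longrightarrow> inbox D R y \<longrightarrow>
      \<bar>f k x\<bar> \<le> M \<and> \<bar>f k x - f k y\<bar> \<le> L * (\<Sum>j\<in>D. \<bar>x j - y j\<bar>))"
  using assms
proof (induction K rule: finite_induct)
  case empty show ?case by (rule exI[of _ 0], rule exI[of _ 0]) simp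
next
  case (insert a K)
  have "\<exists>M L. 0 \<le> L \<and> (\<forall>k\<in>K. \<forall>x y. inbox D R x \<longrightarrow> inbox D R y \<longrightarrow>
      \<bar>f k x\<bar> \<le> M \<and> \<bar>f k x - f k y\<bar> \<le> L * (\<Sum>j\<in>D. \<bar>x j - y j\<bar>))"
    by (rule insert.IH) (rule insert.prems, simp)
  then obtain M L where HML: "0 \<le> L" "\<forall>k\<in>K. \<forall>x y. inbox D R x \<longrightarrow> inbox D R y \<longrightarrow>
      \<bar>f k x\<bar> \<le> M \<and> \<bar>f k x - f k y\<bar> \<le> L * (\<Sum>j\<in>D. \<bar>x j - y j\<bar>)" by blast
  have ga: "good D (f a)" by (rule insert.prems) simp
  obtain M1 L1 where 1: "0 \<le> L1" "\<And>x y. inbox D R x \<Longrightarrow> inbox D R y \<Longrightarrow>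
      \<bar>f a x\<bar> \<le> M1 \<and> \<bar>f a x - f a y\<bar> \<le> L1 * (\<Sum>j\<in>D. \<bar>x j - y j\<bar>)"
    by (rule goodE[OF ga, where R=R], rule that)
  show ?case
  proof (rule exI[of _ "max M M1"], rule exI[of _ "max L L1"], intro conjI ballI allI impI)
    fix k x y assume k: "k \<in> insert a K" and xy: "inbox D R x" "inbox D R y"
    have S0: "0 \<le> (\<Sum>j\<in>D. \<bar>x j - y j\<bar>)" by (intro sum_nonneg) auto
    have mL: "L * (\<Sum>j\<in>D. \<bar>x j - y j\<bar>) \<le> max L L1 * (\<Sum>j\<in>D. \<bar>x j - y j\<bar>)"
         "L1 * (\<Sum>j\<in>D. \<bar>x j - y j\<bar>) \<le> max L L1 * (\<Sum>j\<in>D. \<bar>x j - y j\<bar>)"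
      by (rule mult_right_mono[OF _ S0], simp)+
    have "\<bar>f k x\<bar> \<le> max M M1 \<and> \<bar>f k x - f k y\<bar> \<le> max L L1 * (\<Sum>j\<in>D. \<bar>x j - y j\<bar>)"
    proof (cases "k = a")
      case True
      then show ?thesis using 1(2)[OF xy] mL(2) by auto
    next
      case False
      then have "k \<in> K" using k by auto
      then have "\<bar>f k x\<bar> \<le> M \<and> \<bar>f k x - f k y\<bar> \<le> L * (\<Sum>j\<in>D. \<bar>x j - y j\<bar>)"
        using HML(2) xy by simp
      then show ?thesis using mL(1) by auto
    qed
    then show "\<bar>f k x\<bar> \<le> max M M1" "\<bar>f k x - f k y\<bar> \<le> max L L1 * (\<Sum>j\<in>D. \<bar>x j - y j\<bar>)"
      by auto
  qed (use HML 1 in auto)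
qed

lemma clip_inbox: "0 \<le> R \<Longrightarrow> inbox D R (\<lambda>j. max (- R) (min R (x j)))"
  unfolding inbox_def by (simp add: abs_le_iff max_def min_def)

lemma clip_lip: "\<bar>max (- R) (min R a) - max (- R) (min R b)\<bar> \<le> \<bar>a - (b::real)\<bar>"
  by (smt (verit))


lemma sum_pairs:
  fixes f :: "nat \<Rightarrow> 'a::comm_monoid_add" and l :: nat
  shows "(\<Sum>k=1..2*l. f k) = (\<Sum>q=1..l. f (2*q-1) + f (2*q))"
proof (induction l)
  case 0 then show ?case by simp
next
  case (Suc l)
  have "{1..2 * Suc l} = insert (2*l+2) (insert (2*l+1) {1..2*l})" by auto
  then have "(\<Sum>k=1..2*Suc l. f k) = f (2*l+2) + (f (2*l+1) + (\<Sum>k=1..2*l. f k))" by simp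
  then show ?case using Suc by (simp add: add_ac)
qed

lemma mulv_Smat_odd: "q \<in> {1..l} \<Longrightarrow> mulv (Smat z) (2*l) x (2*q-1) = z q * x (2*q)"
proof -
  assume q: "q \<in> {1..l}"
  then have "2*q-1 \<in> {1..2*l}" "odd (2*q-1)" "(2*q-1+1) div 2 = q" "2*q-1+1 = 2*q" by auto
  then show ?thesis using mulv_Smat[of "2*q-1" l z x] by simp
qed

lemma mulv_Smat_even: "q \<in> {1..l} \<Longrightarrow> mulv (Smat z) (2*l) x (2*q) = - (z q * x (2*q-1))"
proof -
  assume q: "q \<in> {1..l}"
  then have "2*q \<in> {1..2*l}" by auto
  then show ?thesis using mulv_Smat[of "2*q" l z x] by simp
qed

locale sys =
  fixes N l :: nat and E :: "(nat \<times> nat) set" and w :: "nat \<Rightarrow> real" and mu1 mu2 :: real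
  assumes N1: "N \<ge> 1" and l1: "l \<ge> 1" and Esub: "E \<subseteq> {0..N} \<times> {0..N}"
    and tree: "contains_spanning_tree E {0..N} 0"
    and Esym: "\<forall>i\<in>{1..N}. \<forall>j\<in>{1..N}. (i, j) \<in> E \<longleftrightarrow> (j, i) \<in> E"
    and mu1: "mu1 > 0" and mu2: "mu2 > 0"
begin

definition hat :: "(nat \<Rightarrow> real) \<Rightarrow> nat \<Rightarrow> real" where
  "hat y j = (if j = 0 then 0 else y j)"

definition lin :: "(nat \<Rightarrow> real) \<Rightarrow> nat \<Rightarrow> real" where
  "lin y i = (\<Sum>j\<in>nbrs E N i. hat y j - y i)"

definition Bf :: "(nat \<Rightarrow> real) \<Rightarrow> (nat \<Rightarrow> real) \<Rightarrow> real" where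
  "Bf y z = (\<Sum>i=1..N. z i * lin y i)"

lemma nbrs_sub: "nbrs E N i \<subseteq> {0..N}" by (auto simp: nbrs_def)
lemma nbrs_fin: "finite (nbrs E N i)" by (rule finite_subset[OF nbrs_sub]) simp

lemma sum_nbrs: "(\<Sum>j\<in>nbrs E N i. g j) = (if (0, i) \<in> E then g 0 else 0) + (\<Sum>j=1..N. if (j, i) \<in> E then g j else 0)"
proof -
  have "(\<Sum>j\<in>nbrs E N i. g j) = (\<Sum>j=0..N. if (j, i) \<in> E then g j else 0)"
    unfolding nbrs_def by (rule sum.inter_filter) simp
  also have "\<dots> = (if (0, i) \<in> E then g 0 else 0) + (\<Sum>j=Suc 0..N. if (j, i) \<in> E then g j else 0)"
    by (rule sum.atLeast_Suc_atMost) simp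
  finally show ?thesis by simp
qed

definition a0 :: "nat \<Rightarrow> real" where "a0 i = (if (0, i) \<in> E then 1 else 0)"
definition deg :: "nat \<Rightarrow> real" where "deg i = real (card (nbrs E N i))"

lemma lin_alt: "lin y i = (\<Sum>j=1..N. if (j, i) \<in> E then y j else 0) - deg i * y i"
proof -
  have "lin y i = (\<Sum>j\<in>nbrs E N i. hat y j) - (\<Sum>j\<in>nbrs E N i. y i)"
    unfolding lin_def by (simp add: sum_subtractf)
  also have "(\<Sum>j\<in>nbrs E N i. hat y j) = (\<Sum>j=1..N. if (j, i) \<in> E then y j else 0)"
    unfolding sum_nbrs by (simp add: hat_def, intro sum.cong) (auto simp: hat_def)
  also have "(\<Sum>j\<in>nbrs E N i. y i) = deg i * y i" by (simp add: deg_def)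
  finally show ?thesis .
qed

lemma Bf_sym: "Bf y z = Bf z y"
proof -
  define P :: "(nat \<Rightarrow> real) \<Rightarrow> (nat \<Rightarrow> real) \<Rightarrow> real" where "P y z = (\<Sum>i=1..N. \<Sum>j=1..N. if (j, i) \<in> E then z i * y j else 0)" for y z
  have B: "Bf y z = P y z - (\<Sum>i=1..N. deg i * z i * y i)" for y z
    unfolding Bf_def lin_alt P_def
    by (simp add: algebra_simps sum_subtractf sum_distrib_left if_distrib cong: if_cong)
  have "P y z = (\<Sum>j=1..N. \<Sum>i=1..N. if (j, i) \<in> E then z i * y j else 0)"
    unfolding P_def by (rule sum.swap)
  also have "\<dots> = P z y"
    unfolding P_def using Esym by (intro sum.cong refl) (auto simp: mult.commute)
  finally show ?thesis using B[of y z] B[of z y] by (simp add: mult.commute mult.left_commute)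
qed

lemma hat_lin: "hat (\<lambda>i. a * y i + b * z i) j = a * hat y j + b * hat z j"
  by (simp add: hat_def)

lemma lin_lin: "lin (\<lambda>i. a * y i + b * z i) i = a * lin y i + b * lin z i"
  unfolding lin_def hat_lin by (simp add: algebra_simps sum.distrib sum_distrib_left sum_subtractf)

lemma Bf_lin1: "Bf (\<lambda>i. a * y i + b * z i) u = a * Bf y u + b * Bf z u"
  unfolding Bf_def lin_lin by (simp add: algebra_simps sum.distrib sum_distrib_left)

end


context sys begin

lemma Bf_neg_form:
  "- Bf y y = (\<Sum>i=1..N. a0 i * (y i)\<^sup>2) + (\<Sum>i=1..N. \<Sum>j=1..N. if (j, i) \<in> E then (y i - y j)\<^sup>2 / 2 else 0)"
proof -
  define T where "T = (\<Sum>i=1..N. \<Sum>j=1..N. if (j, i) \<in> E then y i * (y i - y j) else 0)"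
  have lin_y: "lin y i = - a0 i * y i + (\<Sum>j=1..N. if (j, i) \<in> E then y j - y i else 0)" if "i \<in> {1..N}" for i
  proof -
    have "lin y i = (if (0, i) \<in> E then hat y 0 - y i else 0) + (\<Sum>j=1..N. if (j, i) \<in> E then hat y j - y i else 0)"
      unfolding lin_def by (rule sum_nbrs)
    also have "(\<Sum>j=1..N. if (j, i) \<in> E then hat y j - y i else 0) = (\<Sum>j=1..N. if (j, i) \<in> E then y j - y i else 0)"
      by (intro sum.cong) (auto simp: hat_def)
    finally show ?thesis by (simp add: a0_def hat_def)
  qed
  have F1: "- Bf y y = (\<Sum>i=1..N. a0 i * (y i)\<^sup>2) + T"
  proof -
    have "- Bf y y = (\<Sum>i=1..N. - (y i * lin y i))" unfolding Bf_def by (simp add: sum_negf)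
    also have "\<dots> = (\<Sum>i=1..N. a0 i * (y i)\<^sup>2 + (\<Sum>j=1..N. if (j, i) \<in> E then y i * (y i - y j) else 0))"
    proof (intro sum.cong refl)
      fix i assume i: "i \<in> {1..N}"
      have "- (y i * lin y i) = a0 i * (y i)\<^sup>2 - y i * (\<Sum>j=1..N. if (j, i) \<in> E then y j - y i else 0)"
        unfolding lin_y[OF i] by (simp add: power2_eq_square algebra_simps)
      also have "y i * (\<Sum>j=1..N. if (j, i) \<in> E then y j - y i else 0) = - (\<Sum>j=1..N. if (j, i) \<in> E then y i * (y i - y j) else 0)"
        by (simp add: sum_distrib_left sum_negf[symmetric] algebra_simps if_distrib cong: if_cong)
      finally show "- (y i * lin y i) = a0 i * (y i)\<^sup>2 + (\<Sum>j=1..N. if (j, i) \<in> E then y i * (y i - y j) else 0)"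
        by simp
    qed
    finally show ?thesis by (simp add: sum.distrib T_def)
  qed
  have F2: "T = (\<Sum>i=1..N. \<Sum>j=1..N. if (j, i) \<in> E then y j * (y j - y i) else 0)"
  proof -
    have "T = (\<Sum>j=1..N. \<Sum>i=1..N. if (j, i) \<in> E then y i * (y i - y j) else 0)"
      unfolding T_def by (rule sum.swap)
    also have "\<dots> = (\<Sum>i=1..N. \<Sum>j=1..N. if (j, i) \<in> E then y j * (y j - y i) else 0)"
      using Esym by (intro sum.cong refl) auto
    finally show ?thesis .
  qed
  from F2 have "2 * T = T + (\<Sum>i=1..N. \<Sum>j=1..N. if (j, i) \<in> E then y j * (y j - y i) else 0)" by simp
  also have "\<dots> = (\<Sum>i=1..N. \<Sum>j=1..N. if (j, i) \<in> E then (y i - y j)\<^sup>2 else 0)"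
    unfolding T_def sum.distrib[symmetric]
    by (intro sum.cong refl) (auto simp: power2_eq_square algebra_simps)
  finally have T2: "2 * T = (\<Sum>i=1..N. \<Sum>j=1..N. if (j, i) \<in> E then (y i - y j)\<^sup>2 else 0)" .
  have "(\<Sum>i=1..N. \<Sum>j=1..N. if (j, i) \<in> E then (y i - y j)\<^sup>2 / 2 else 0) =
     (\<Sum>i=1..N. \<Sum>j=1..N. if (j, i) \<in> E then (y i - y j)\<^sup>2 else 0) / 2"
    unfolding sum_divide_distrib by (intro sum.cong refl) auto
  then have "T = (\<Sum>i=1..N. \<Sum>j=1..N. if (j, i) \<in> E then (y i - y j)\<^sup>2 / 2 else 0)"
    using T2 by simp
  then show ?thesis using F1 by simp
qed

lemma Bf_nonpos: "Bf y y \<le> 0"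
proof -
  have "0 \<le> (\<Sum>i=1..N. a0 i * (y i)\<^sup>2)" by (intro sum_nonneg) (auto simp: a0_def)
  moreover have "0 \<le> (\<Sum>i=1..N. \<Sum>j=1..N. if (j, i) \<in> E then (y i - y j)\<^sup>2 / 2 else 0)"
    by (intro sum_nonneg) auto
  ultimately show ?thesis using Bf_neg_form[of y] by linarith
qed

lemma edge_bound:
  assumes "(j, i) \<in> E" "i \<in> {1..N}"
  shows "(hat y j - y i)\<^sup>2 \<le> - 2 * Bf y y"
proof -
  define S1 where "S1 = (\<Sum>i=1..N. a0 i * (y i)\<^sup>2)"
  define S2 where "S2 = (\<Sum>i=1..N. \<Sum>j=1..N. if (j, i) \<in> E then (y i - y j)\<^sup>2 / 2 else 0)"
  have S1: "0 \<le> S1" unfolding S1_def by (intro sum_nonneg) (auto simp: a0_def)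
  have S2: "0 \<le> S2" unfolding S2_def by (intro sum_nonneg) auto
  have B: "- Bf y y = S1 + S2" unfolding S1_def S2_def by (rule Bf_neg_form)
  have j: "j \<in> {0..N}" using assms Esub by auto
  show ?thesis
  proof (cases "j = 0")
    case True
    have "a0 i * (y i)\<^sup>2 \<le> S1" unfolding S1_def
      by (rule member_le_sum[OF assms(2)]) (auto simp: a0_def)
    then have "(y i)\<^sup>2 \<le> S1" using assms True by (simp add: a0_def)
    then show ?thesis using True S1 S2 B by (simp add: hat_def)
  next
    case False
    then have j1: "j \<in> {1..N}" using j by auto
    have "(if (j, i) \<in> E then (y i - y j)\<^sup>2 / 2 else 0) \<le> (\<Sum>j=1..N. if (j, i) \<in> E then (y i - y j)\<^sup>2 / 2 else 0)"
      by (rule member_le_sum[OF j1]) auto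
    also have "\<dots> \<le> S2" unfolding S2_def
      by (rule member_le_sum[OF assms(2)]) (auto intro: sum_nonneg)
    finally have "(y i - y j)\<^sup>2 \<le> 2 * S2" using assms by simp
    moreover have "(hat y j - y i)\<^sup>2 = (y i - y j)\<^sup>2" using False by (simp add: hat_def power2_commute)
    ultimately show ?thesis using S1 S2 B by simp
  qed
qed

lemma sq_tri: "(a::real)\<^sup>2 \<le> 2 * (b - a)\<^sup>2 + 2 * b\<^sup>2"
proof -
  have "2 * (b - a)\<^sup>2 + 2 * b\<^sup>2 - a\<^sup>2 = (a - 2 * b)\<^sup>2" by (simp add: power2_eq_square algebra_simps)
  moreover have "0 \<le> (a - 2 * b)\<^sup>2" by simp
  ultimately show ?thesis by linarith
qed

lemma path_bound:
  assumes T: "T \<subseteq> E" "\<forall>j. (j, 0) \<notin> T" and p: "(0, i) \<in> T\<^sup>*"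
  shows "\<exists>c\<ge>0. \<forall>y. (hat y i)\<^sup>2 \<le> c * (- Bf y y)"
  using p
proof (induction rule: rtrancl_induct)
  case base
  show ?case by (rule exI[of _ 0]) (simp add: hat_def)
next
  case (step j i)
  obtain c where c: "c \<ge> 0" "\<And>y. (hat y j)\<^sup>2 \<le> c * (- Bf y y)" using step.IH by blast
  have E: "(j, i) \<in> E" using step.hyps T by auto
  have i0: "i \<noteq> 0" using step.hyps(2) T(2) by metis
  then have i: "i \<in> {1..N}" using E Esub by auto
  show ?case
  proof (rule exI[of _ "4 + 2 * c"], intro conjI allI)
    show "0 \<le> 4 + 2 * c" using c by simp
    fix y
    have "(hat y i)\<^sup>2 = (y i)\<^sup>2" using i0 by (simp add: hat_def)
    also have "\<dots> \<le> 2 * (hat y j - y i)\<^sup>2 + 2 * (hat y j)\<^sup>2" by (rule sq_tri)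
    also have "\<dots> \<le> 2 * (- 2 * Bf y y) + 2 * (c * (- Bf y y))"
      using edge_bound[OF E i, of y] c(2)[of y] by linarith
    also have "\<dots> = (4 + 2 * c) * (- Bf y y)" by (simp add: algebra_simps)
    finally show "(hat y i)\<^sup>2 \<le> (4 + 2 * c) * (- Bf y y)" .
  qed
qed

lemma coerc_eta: "\<exists>c\<ge>0. \<forall>y. \<forall>i\<in>{1..N}. (y i)\<^sup>2 \<le> c * (- Bf y y)"
proof -
  obtain T where T: "T \<subseteq> E" "rooted_spanning_tree 0 {0..N} T"
    using tree unfolding contains_spanning_tree_def by blast
  have T0: "\<forall>j. (j, 0) \<notin> T" and Tr: "\<forall>i\<in>{0..N}. (0, i) \<in> T\<^sup>*"
    using T(2) unfolding rooted_spanning_tree_def by auto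
  have "\<forall>i\<in>{1..N}. \<exists>c. c \<ge> 0 \<and> (\<forall>y. (hat y i)\<^sup>2 \<le> c * (- Bf y y))"
    using path_bound[OF T(1) T0] Tr by auto
  then obtain cf where cf: "\<forall>i\<in>{1..N}. cf i \<ge> 0 \<and> (\<forall>y. (hat y i)\<^sup>2 \<le> cf i * (- Bf y y))"
    by (rule bchoice[elim_format]) blast
  show ?thesis
  proof (rule exI[of _ "\<Sum>i=1..N. cf i"], intro conjI allI ballI)
    show "0 \<le> (\<Sum>i=1..N. cf i)" using cf by (intro sum_nonneg) auto
    fix y i assume i: "i \<in> {1..N}"
    have Q: "0 \<le> - Bf y y" using Bf_nonpos[of y] by simp
    have "(y i)\<^sup>2 = (hat y i)\<^sup>2" using i by (simp add: hat_def)
    also have "\<dots> \<le> cf i * (- Bf y y)" using cf i by blast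
    also have "\<dots> \<le> (\<Sum>i=1..N. cf i) * (- Bf y y)"
      by (rule mult_right_mono[OF _ Q], rule member_le_sum[OF i]) (use cf in auto)
    finally show "(y i)\<^sup>2 \<le> (\<Sum>i=1..N. cf i) * (- Bf y y)" .
  qed
qed

end


lemma good_Smat_row:
  assumes k: "k \<in> {1..2*l}" and Z: "\<And>q. q \<in> {1..l} \<Longrightarrow> good D (\<lambda>x. Z x q)"
    and X: "\<And>j. j \<in> {1..2*l} \<Longrightarrow> good D (\<lambda>x. X x j)"
  shows "good D (\<lambda>x. mulv (Smat (Z x)) (2*l) (X x) k)"
proof (cases "odd k")
  case True
  then have "(k+1) div 2 \<in> {1..l}" "k + 1 \<in> {1..2*l}" using k by (auto; presburger)+
  then show ?thesis unfolding mulv_Smat[OF k] using True by (simp add: good_mult Z X)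
next
  case False
  then have "k div 2 \<in> {1..l}" "k - 1 \<in> {1..2*l}" using k by (auto; presburger)+
  then show ?thesis unfolding mulv_Smat[OF k] using False by (simp add: good_mult good_uminus Z X)
qed

lemma good_phi_row:
  assumes q: "q \<in> {1..l}" and e: "\<And>j. j \<in> {1..2*l} \<Longrightarrow> good D (\<lambda>x. e x j)"
    and X: "\<And>j. j \<in> {1..2*l} \<Longrightarrow> good D (\<lambda>x. X x j)"
  shows "good D (\<lambda>x. mulv (phi (e x)) (2*l) (X x) q)"
proof -
  have "2*q-1 \<in> {1..2*l}" "2*q \<in> {1..2*l}" using q by auto
  then show ?thesis unfolding mulv_phi[OF q] by (intro good_diff good_mult e X)
qed

lemma abs_le_sq: "(a::real)\<^sup>2 \<le> C \<Longrightarrow> \<bar>a\<bar> \<le> C + 1"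
proof (cases "\<bar>a\<bar> \<le> 1")
  case True
  moreover assume "a\<^sup>2 \<le> C"
  moreover have "0 \<le> a\<^sup>2" by simp
  ultimately show ?thesis by linarith
next
  case False
  assume h: "a\<^sup>2 \<le> C"
  have "\<bar>a\<bar> * 1 \<le> \<bar>a\<bar> * \<bar>a\<bar>" using False by (intro mult_left_mono) auto
  then have "\<bar>a\<bar> \<le> a\<^sup>2" by (simp add: power2_eq_square abs_mult[symmetric])
  then show ?thesis using h by linarith
qed

context sys begin

definition Dom :: "(nat \<times> nat) set" where
  "Dom = ({0..N} \<times> {1..2*l}) \<union> ({N+1..2*N} \<times> {1..l})"

lemma Dom_fin: "finite Dom" unfolding Dom_def by auto

definition evx :: "(nat \<times> nat \<Rightarrow> real) \<Rightarrow> nat \<Rightarrow> nat \<Rightarrow> real" where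
  "evx x i k = (\<Sum>j\<in>nbrs E N i. x (j, k) - x (i, k))"

definition Fsys :: "(nat \<times> nat \<Rightarrow> real) \<Rightarrow> nat \<times> nat \<Rightarrow> real" where
  "Fsys x p = (if fst p = 0 then mulv (Smat w) (2*l) (\<lambda>q. x (0, q)) (snd p)
     else if fst p \<le> N then mulv (Smat (\<lambda>q. x (N + fst p, q))) (2*l) (\<lambda>q. x (fst p, q)) (snd p)
        + mu1 * evx x (fst p) (snd p)
     else mu2 * mulv (phi (\<lambda>k. evx x (fst p - N) k)) (2*l) (\<lambda>q. x (fst p - N, q)) (snd p))"

definition ytil :: "(nat \<times> nat \<Rightarrow> real) \<Rightarrow> nat \<Rightarrow> nat \<Rightarrow> real" where
  "ytil x k = (\<lambda>i. x (i, k) - x (0, k))"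

lemma lin_ytil: "i \<in> {1..N} \<Longrightarrow> lin (ytil x k) i = evx x i k"
  unfolding lin_def evx_def
  by (intro sum.cong refl) (auto simp: hat_def ytil_def)

definition Zf :: "(nat \<times> nat \<Rightarrow> real) \<Rightarrow> real" where
  "Zf x = (\<Sum>k=1..2*l. (x (0, k))\<^sup>2) + (1/2) * (\<Sum>k=1..2*l. - Bf (ytil x k) (ytil x k))
     + (1 / (2 * mu2)) * (\<Sum>i=1..N. \<Sum>q=1..l. (x (N + i, q) - w q)\<^sup>2)"

lemma Zf_parts:
  shows "0 \<le> (\<Sum>k=1..2*l. (x (0, k))\<^sup>2)" "0 \<le> (\<Sum>k=1..2*l. - Bf (ytil x k) (ytil x k))"
    "0 \<le> (\<Sum>i=1..N. \<Sum>q=1..l. (x (N + i, q) - w q)\<^sup>2)"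
  using Bf_nonpos by (auto intro!: sum_nonneg)

lemma Zf_nonneg: "0 \<le> Zf x"
  unfolding Zf_def using Zf_parts[of x] mu2 by (intro add_nonneg_nonneg mult_nonneg_nonneg) auto

lemma coerc: "\<exists>B. \<forall>x. Zf x \<le> C \<longrightarrow> (\<forall>j\<in>Dom. \<bar>x j\<bar> \<le> B)"
proof -
  obtain c where c: "c \<ge> 0" "\<And>y i. i \<in> {1..N} \<Longrightarrow> (y i)\<^sup>2 \<le> c * (- Bf y y)"
    using coerc_eta by blast
  define W where "W = (\<Sum>q=1..l. \<bar>w q\<bar>)"
  define B where "B = (2 * c * C + 1) + (C + 1) + (2 * mu2 * C + 1) + W"
  have W0: "0 \<le> W" unfolding W_def by (intro sum_nonneg) auto
  show ?thesis
  proof (rule exI[of _ B], intro allI impI ballI)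
    fix x j assume Z: "Zf x \<le> C" and j: "j \<in> Dom"
    define S1 where "S1 = (\<Sum>k=1..2*l. (x (0, k))\<^sup>2)"
    define S2 where "S2 = (\<Sum>k=1..2*l. - Bf (ytil x k) (ytil x k))"
    define S3 where "S3 = (\<Sum>i=1..N. \<Sum>q=1..l. (x (N + i, q) - w q)\<^sup>2)"
    have S: "0 \<le> S1" "0 \<le> S2" "0 \<le> S3" using Zf_parts[of x] by (auto simp: S1_def S2_def S3_def)
    have ZS: "Zf x = S1 + S2 / 2 + S3 / (2 * mu2)" unfolding Zf_def S1_def S2_def S3_def by simp
    have C0: "0 \<le> C" using Zf_nonneg[of x] Z by simp
    have S3m: "0 \<le> S3 / (2 * mu2)" using S mu2 by simp
    have S1C: "S1 \<le> C" using ZS Z S S3m by linarith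
    have S2C: "S2 \<le> 2 * C" using ZS Z S S3m by linarith
    have S3C: "S3 \<le> 2 * mu2 * C"
    proof -
      have "S3 / (2 * mu2) \<le> C" using ZS Z S by linarith
      then show ?thesis using mu2 by (simp add: divide_le_eq mult.commute)
    qed
    have v: "\<bar>x (0, k)\<bar> \<le> C + 1" if k: "k \<in> {1..2*l}" for k
    proof -
      have "(x (0, k))\<^sup>2 \<le> S1" unfolding S1_def by (rule member_le_sum[OF k]) auto
      then show ?thesis using S1C by (intro abs_le_sq) linarith
    qed
    have P1: "0 \<le> 2 * c * C" "0 \<le> 2 * mu2 * C" using c(1) C0 mu2 by auto
    obtain i0 k0 where j0: "j = (i0, k0)" by (cases j)
    consider (a) i k where "j = (i, k)" "i \<in> {0..N}" "k \<in> {1..2*l}"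
      | (b) i q where "j = (N + i, q)" "i \<in> {1..N}" "q \<in> {1..l}"
    proof (cases "i0 \<le> N")
      case True
      then show thesis using j j0 that(1)[of i0 k0] by (auto simp: Dom_def)
    next
      case False
      then have "i0 = N + (i0 - N)" "i0 - N \<in> {1..N}" "k0 \<in> {1..l}" using j j0 by (auto simp: Dom_def)
      then show thesis using j0 that(2)[of "i0 - N" k0] by auto
    qed
    then show "\<bar>x j\<bar> \<le> B"
    proof cases
      case a
      show ?thesis
      proof (cases "i = 0")
        case True
        then show ?thesis using v[OF a(3)] W0 P1 unfolding a(1) True B_def by linarith
      next
        case False
        then have i: "i \<in> {1..N}" using a by auto
        have "(ytil x k i)\<^sup>2 \<le> c * (- Bf (ytil x k) (ytil x k))" by (rule c(2)[OF i])
        also have "- Bf (ytil x k) (ytil x k) \<le> S2" unfolding S2_def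
          by (rule member_le_sum[OF a(3)]) (use Bf_nonpos in auto)
        then have "c * (- Bf (ytil x k) (ytil x k)) \<le> c * (2 * C)" using S2C c(1) by (intro mult_left_mono) auto
        finally have "\<bar>ytil x k i\<bar> \<le> 2 * c * C + 1" by (intro abs_le_sq) simp
        then have "\<bar>x (i, k)\<bar> \<le> (2 * c * C + 1) + (C + 1)"
          using v[OF a(3)] unfolding ytil_def by linarith
        then show ?thesis using W0 P1 unfolding a(1) B_def by linarith
      qed
    next
      case b
      have "(x (N + i, q) - w q)\<^sup>2 \<le> (\<Sum>q=1..l. (x (N + i, q) - w q)\<^sup>2)"
        by (rule member_le_sum[OF b(3)]) auto
      also have "\<dots> \<le> S3" unfolding S3_def
        by (rule member_le_sum[OF b(2)]) (auto intro: sum_nonneg)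
      finally have "\<bar>x (N + i, q) - w q\<bar> \<le> 2 * mu2 * C + 1" using S3C by (intro abs_le_sq) simp
      moreover have "\<bar>w q\<bar> \<le> W" unfolding W_def by (rule member_le_sum[OF b(3)]) auto
      ultimately show ?thesis using C0 P1 unfolding b(1) B_def by linarith
    qed
  qed
qed

lemma good_evx:
  assumes "i \<in> {0..N}" "k \<in> {1..2*l}"
  shows "good Dom (\<lambda>x. evx x i k)"
  unfolding evx_def
proof (rule good_sum[OF nbrs_fin])
  fix j assume "j \<in> nbrs E N i"
  then have "j \<in> {0..N}" using nbrs_sub by blast
  then have "(j, k) \<in> Dom" "(i, k) \<in> Dom" using assms by (auto simp: Dom_def)
  then show "good Dom (\<lambda>x. x (j, k) - x (i, k))" by (intro good_diff good_coord Dom_fin)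
qed

lemma good_Fsys:
  assumes p: "p \<in> Dom"
  shows "good Dom (\<lambda>x. Fsys x p)"
proof -
  obtain i k where ik: "p = (i, k)" by (cases p)
  show ?thesis
  proof (cases "i = 0")
    case True
    then have k: "k \<in> {1..2*l}" using p ik by (auto simp: Dom_def)
    have "good Dom (\<lambda>x. mulv (Smat ((\<lambda>x. w) x)) (2*l) ((\<lambda>x q. x (0, q)) x) k)"
      by (rule good_Smat_row[OF k]) (auto intro!: good_const good_coord Dom_fin simp: Dom_def)
    then show ?thesis using True ik by (simp add: Fsys_def)
  next
    case False
    show ?thesis
    proof (cases "i \<le> N")
      case True
      then have i: "i \<in> {1..N}" and k: "k \<in> {1..2*l}" using False p ik by (auto simp: Dom_def)
      have "good Dom (\<lambda>x. mulv (Smat ((\<lambda>x q. x (N + i, q)) x)) (2*l) ((\<lambda>x q. x (i, q)) x) k)"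
        by (rule good_Smat_row[OF k]) (use i in \<open>auto intro!: good_coord Dom_fin simp: Dom_def\<close>)
      moreover have "good Dom (\<lambda>x. mu1 * evx x i k)" using i k by (intro good_cmult good_evx) auto
      ultimately show ?thesis using False True ik by (simp add: Fsys_def good_add)
    next
      case gN: False
      then have i: "i - N \<in> {1..N}" and q: "k \<in> {1..l}" using p ik by (auto simp: Dom_def)
      have "good Dom (\<lambda>x. mulv (phi ((\<lambda>x j. evx x (i - N) j) x)) (2*l) ((\<lambda>x q. x (i - N, q)) x) k)"
      proof (rule good_phi_row[OF q])
        fix j assume j: "j \<in> {1..2*l}"
        show "good Dom (\<lambda>x. evx x (i - N) j)" using i j by (intro good_evx) auto
        have "(i - N, j) \<in> Dom" using i j by (auto simp: Dom_def)
        then show "good Dom (\<lambda>x. x (i - N, j))" by (intro good_coord Dom_fin)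
      qed
      then show ?thesis using False gN ik by (simp add: Fsys_def good_cmult)
    qed
  qed
qed

end


lemma sq_deriv:
  assumes "(f has_real_derivative f') (at t within S)"
  shows "((\<lambda>s. (f s)\<^sup>2) has_real_derivative 2 * f t * f') (at t within S)"
  using DERIV_power[OF assms, of 2] by (simp add: mult.commute mult.left_commute)

context sys begin

lemma hat_deriv:
  assumes "j \<in> {0..N}" "\<And>i. i \<in> {1..N} \<Longrightarrow> ((\<lambda>s. y s i) has_real_derivative y' i) (at t within S)"
  shows "((\<lambda>s. hat (y s) j) has_real_derivative hat y' j) (at t within S)"
proof (cases "j = 0")
  case True then show ?thesis by (simp add: hat_def)
next
  case False then show ?thesis using assms by (simp add: hat_def)
qed

lemma lin_deriv:
  assumes "i \<in> {1..N}" "\<And>i. i \<in> {1..N} \<Longrightarrow> ((\<lambda>s. y s i) has_real_derivative y' i) (at t within S)"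
  shows "((\<lambda>s. lin (y s) i) has_real_derivative lin y' i) (at t within S)"
  unfolding lin_def
proof (rule DERIV_sum)
  fix j assume "j \<in> nbrs E N i"
  then have j: "j \<in> {0..N}" using nbrs_sub by blast
  show "((\<lambda>s. hat (y s) j - y s i) has_real_derivative hat y' j - y' i) (at t within S)"
    by (intro DERIV_diff hat_deriv[OF j] assms) (use assms in auto)
qed

lemma Bf_deriv:
  assumes "\<And>i. i \<in> {1..N} \<Longrightarrow> ((\<lambda>s. y s i) has_real_derivative y' i) (at t within S)"
    and "\<And>i. i \<in> {1..N} \<Longrightarrow> ((\<lambda>s. z s i) has_real_derivative z' i) (at t within S)"
  shows "((\<lambda>s. Bf (y s) (z s)) has_real_derivative Bf y' (z t) + Bf (y t) z') (at t within S)"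
proof -
  have "((\<lambda>s. Bf (y s) (z s)) has_real_derivative (\<Sum>i=1..N. z' i * lin (y t) i + lin y' i * z t i)) (at t within S)"
    unfolding Bf_def
  proof (rule DERIV_sum)
    fix i assume i: "i \<in> {1..N}"
    show "((\<lambda>s. z s i * lin (y s) i) has_real_derivative z' i * lin (y t) i + lin y' i * z t i) (at t within S)"
      by (rule DERIV_mult[OF assms(2)[OF i] lin_deriv[OF i assms(1)]])
  qed
  moreover have "(\<Sum>i=1..N. z' i * lin (y t) i + lin y' i * z t i) = Bf y' (z t) + Bf (y t) z'"
    unfolding Bf_def by (simp add: sum.distrib mult.commute)
  ultimately show ?thesis by simp
qed

definition dZf :: "(nat \<times> nat \<Rightarrow> real) \<Rightarrow> (nat \<times> nat \<Rightarrow> real) \<Rightarrow> real" where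
  "dZf x x' = (\<Sum>k=1..2*l. 2 * x (0, k) * x' (0, k))
     + (1/2) * (\<Sum>k=1..2*l. - (Bf (ytil x' k) (ytil x k) + Bf (ytil x k) (ytil x' k)))
     + (1 / (2 * mu2)) * (\<Sum>i=1..N. \<Sum>q=1..l. 2 * (x (N + i, q) - w q) * x' (N + i, q))"

lemma Zf_deriv:
  assumes d: "\<And>j. j \<in> Dom \<Longrightarrow> ((\<lambda>s. X s j) has_real_derivative X' j) (at t within S)"
  shows "((\<lambda>s. Zf (X s)) has_real_derivative dZf (X t) X') (at t within S)"
proof -
  have d1: "((\<lambda>s. \<Sum>k=1..2*l. (X s (0, k))\<^sup>2) has_real_derivative (\<Sum>k=1..2*l. 2 * X t (0, k) * X' (0, k))) (at t within S)"
    by (intro DERIV_sum sq_deriv d) (auto simp: Dom_def)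
  have dy: "((\<lambda>s. ytil (X s) k i) has_real_derivative ytil X' k i) (at t within S)"
    if "k \<in> {1..2*l}" "i \<in> {1..N}" for k i
    unfolding ytil_def using that by (intro DERIV_diff d) (auto simp: Dom_def)
  have d2: "((\<lambda>s. \<Sum>k=1..2*l. - Bf (ytil (X s) k) (ytil (X s) k)) has_real_derivative
      (\<Sum>k=1..2*l. - (Bf (ytil X' k) (ytil (X t) k) + Bf (ytil (X t) k) (ytil X' k)))) (at t within S)"
    by (intro DERIV_sum DERIV_minus Bf_deriv dy) auto
  have d3: "((\<lambda>s. \<Sum>i=1..N. \<Sum>q=1..l. (X s (N + i, q) - w q)\<^sup>2) has_real_derivative
      (\<Sum>i=1..N. \<Sum>q=1..l. 2 * (X t (N + i, q) - w q) * X' (N + i, q))) (at t within S)"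
  proof (intro DERIV_sum)
    fix i q assume "i \<in> {1..N}" "q \<in> {1..l}"
    then have "((\<lambda>s. X s (N + i, q) - w q) has_real_derivative X' (N + i, q) - 0) (at t within S)"
      by (intro DERIV_diff d DERIV_const) (auto simp: Dom_def)
    then show "((\<lambda>s. (X s (N + i, q) - w q)\<^sup>2) has_real_derivative 2 * (X t (N + i, q) - w q) * X' (N + i, q)) (at t within S)"
      using sq_deriv by fastforce
  qed
  show ?thesis
    unfolding Zf_def dZf_def
    by (intro DERIV_add DERIV_cmult d1 d2 d3)
qed

end


context sys begin

lemma F_facts:
  assumes q: "q \<in> {1..l}"
  shows "Fsys x (0, 2*q-1) = w q * x (0, 2*q)"
    and "Fsys x (0, 2*q) = - (w q * x (0, 2*q-1))"
    and "i \<in> {1..N} \<Longrightarrow> Fsys x (i, 2*q-1) = x (N+i, q) * x (i, 2*q) + mu1 * evx x i (2*q-1)"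
    and "i \<in> {1..N} \<Longrightarrow> Fsys x (i, 2*q) = - (x (N+i, q) * x (i, 2*q-1)) + mu1 * evx x i (2*q)"
    and "i \<in> {1..N} \<Longrightarrow> Fsys x (N+i, q) = mu2 * (evx x i (2*q-1) * x (i, 2*q) - evx x i (2*q) * x (i, 2*q-1))"
proof -
  have q1: "2*q-1 \<noteq> 0" "2*q \<noteq> 0" using q by auto
  show "Fsys x (0, 2*q-1) = w q * x (0, 2*q)"
    using mulv_Smat_odd[OF q, of w "\<lambda>q. x (0, q)"] q1 by (simp add: Fsys_def)
  show "Fsys x (0, 2*q) = - (w q * x (0, 2*q-1))"
    using mulv_Smat_even[OF q, of w "\<lambda>q. x (0, q)"] q1 by (simp add: Fsys_def)
  assume i: "i \<in> {1..N}"
  show "Fsys x (i, 2*q-1) = x (N+i, q) * x (i, 2*q) + mu1 * evx x i (2*q-1)"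
    using mulv_Smat_odd[OF q, of "\<lambda>q. x (N+i, q)" "\<lambda>q. x (i, q)"] q1 i by (simp add: Fsys_def)
  show "Fsys x (i, 2*q) = - (x (N+i, q) * x (i, 2*q-1)) + mu1 * evx x i (2*q)"
    using mulv_Smat_even[OF q, of "\<lambda>q. x (N+i, q)" "\<lambda>q. x (i, q)"] q1 i by (simp add: Fsys_def)
  show "Fsys x (N+i, q) = mu2 * (evx x i (2*q-1) * x (i, 2*q) - evx x i (2*q) * x (i, 2*q-1))"
    using mulv_phi[OF q, of "\<lambda>k. evx x i k" "\<lambda>q. x (i, q)"] i by (simp add: Fsys_def)
qed

lemma dZf_F: "dZf x (Fsys x) = - mu1 * (\<Sum>k=1..2*l. \<Sum>i=1..N. (evx x i k)\<^sup>2)"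
proof -
  define x' where "x' = Fsys x"
  define e where "e i k = evx x i k" for i k
  define P where "P i q = (x (N+i, q) - w q) * (e i (2*q-1) * x (i, 2*q) - e i (2*q) * x (i, 2*q-1))" for i q
  define Wt where "Wt i q = w q * (ytil x (2*q) i * e i (2*q-1) - ytil x (2*q-1) i * e i (2*q))" for i q
  define Mu where "Mu i q = mu1 * ((e i (2*q-1))\<^sup>2 + (e i (2*q))\<^sup>2)" for i q
  have A1: "(\<Sum>k=1..2*l. 2 * x (0, k) * x' (0, k)) = 0"
    unfolding sum_pairs
  proof (intro sum.neutral ballI)
    fix q assume q: "q \<in> {1..l}"
    show "2 * x (0, 2*q-1) * x' (0, 2*q-1) + 2 * x (0, 2*q) * x' (0, 2*q) = 0"
      unfolding x'_def F_facts(1,2)[OF q] by (simp add: algebra_simps)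
  qed
  have Bk: "Bf (ytil x' k) (ytil x k) + Bf (ytil x k) (ytil x' k) = 2 * (\<Sum>i=1..N. (x' (i, k) - x' (0, k)) * e i k)" for k
  proof -
    have "Bf (ytil x k) (ytil x' k) = (\<Sum>i=1..N. (x' (i, k) - x' (0, k)) * e i k)"
      unfolding Bf_def e_def
    proof (intro sum.cong refl)
      fix i assume i: "i \<in> {1..N}"
      show "ytil x' k i * lin (ytil x k) i = (x' (i, k) - x' (0, k)) * evx x i k"
        unfolding lin_ytil[OF i] by (simp add: ytil_def)
    qed
    then show ?thesis using Bf_sym[of "ytil x' k" "ytil x k"] by simp
  qed
  have pair: "(x' (i, 2*q-1) - x' (0, 2*q-1)) * e i (2*q-1) + (x' (i, 2*q) - x' (0, 2*q)) * e i (2*q)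
      = P i q + Wt i q + Mu i q" if "i \<in> {1..N}" "q \<in> {1..l}" for i q
    unfolding x'_def F_facts(1,2)[OF that(2)] F_facts(3,4)[OF that(2,1)] P_def Wt_def Mu_def e_def
    by (simp add: ytil_def power2_eq_square algebra_simps)
  have M: "(\<Sum>k=1..2*l. \<Sum>i=1..N. (x' (i, k) - x' (0, k)) * e i k) = (\<Sum>i=1..N. \<Sum>q=1..l. P i q + Wt i q + Mu i q)"
  proof -
    have "(\<Sum>k=1..2*l. \<Sum>i=1..N. (x' (i, k) - x' (0, k)) * e i k) = (\<Sum>i=1..N. \<Sum>k=1..2*l. (x' (i, k) - x' (0, k)) * e i k)"
      by (rule sum.swap)
    also have "\<dots> = (\<Sum>i=1..N. \<Sum>q=1..l. P i q + Wt i q + Mu i q)"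
      unfolding sum_pairs by (intro sum.cong refl pair) auto
    finally show ?thesis .
  qed
  have Wt0: "(\<Sum>i=1..N. \<Sum>q=1..l. Wt i q) = 0"
  proof -
    have "(\<Sum>i=1..N. \<Sum>q=1..l. Wt i q) = (\<Sum>q=1..l. \<Sum>i=1..N. Wt i q)" by (rule sum.swap)
    also have "\<dots> = (\<Sum>q=1..l. w q * (Bf (ytil x (2*q-1)) (ytil x (2*q)) - Bf (ytil x (2*q)) (ytil x (2*q-1))))"
    proof (intro sum.cong refl)
      fix q assume q: "q \<in> {1..l}"
      have "(\<Sum>i=1..N. Wt i q) = w q * ((\<Sum>i=1..N. ytil x (2*q) i * e i (2*q-1)) - (\<Sum>i=1..N. ytil x (2*q-1) i * e i (2*q)))"
        unfolding Wt_def by (simp add: right_diff_distrib sum_subtractf sum_distrib_left)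
      also have "(\<Sum>i=1..N. ytil x (2*q) i * e i (2*q-1)) = Bf (ytil x (2*q-1)) (ytil x (2*q))"
        unfolding Bf_def e_def by (intro sum.cong refl) (simp add: lin_ytil)
      also have "(\<Sum>i=1..N. ytil x (2*q-1) i * e i (2*q)) = Bf (ytil x (2*q)) (ytil x (2*q-1))"
        unfolding Bf_def e_def by (intro sum.cong refl) (simp add: lin_ytil)
      finally show "(\<Sum>i=1..N. Wt i q) = w q * (Bf (ytil x (2*q-1)) (ytil x (2*q)) - Bf (ytil x (2*q)) (ytil x (2*q-1)))" .
    qed
    also have "\<dots> = 0"
      by (intro sum.neutral ballI) (metis Bf_sym diff_self mult_zero_right)
    finally show ?thesis .
  qed
  have A3: "(1 / (2 * mu2)) * (\<Sum>i=1..N. \<Sum>q=1..l. 2 * (x (N + i, q) - w q) * x' (N + i, q)) = (\<Sum>i=1..N. \<Sum>q=1..l. P i q)"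
  proof -
    have "(\<Sum>i=1..N. \<Sum>q=1..l. 2 * (x (N + i, q) - w q) * x' (N + i, q)) = (\<Sum>i=1..N. \<Sum>q=1..l. (2 * mu2) * P i q)"
      unfolding x'_def P_def e_def by (intro sum.cong refl) (simp add: F_facts(5))
    then show ?thesis using mu2 by (simp add: sum_distrib_left[symmetric])
  qed
  have Mu_sum: "(\<Sum>i=1..N. \<Sum>q=1..l. Mu i q) = mu1 * (\<Sum>k=1..2*l. \<Sum>i=1..N. (evx x i k)\<^sup>2)"
  proof -
    have "(\<Sum>k=1..2*l. \<Sum>i=1..N. (evx x i k)\<^sup>2) = (\<Sum>i=1..N. \<Sum>k=1..2*l. (evx x i k)\<^sup>2)" by (rule sum.swap)
    also have "\<dots> = (\<Sum>i=1..N. \<Sum>q=1..l. (e i (2*q-1))\<^sup>2 + (e i (2*q))\<^sup>2)" unfolding sum_pairs e_def ..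
    finally show ?thesis unfolding Mu_def by (simp add: sum_distrib_left)
  qed
  have "dZf x x' = 0 + (1/2) * (\<Sum>k=1..2*l. - (2 * (\<Sum>i=1..N. (x' (i, k) - x' (0, k)) * e i k)))
     + (\<Sum>i=1..N. \<Sum>q=1..l. P i q)"
    unfolding dZf_def A1 A3 Bk ..
  also have "\<dots> = - (\<Sum>k=1..2*l. \<Sum>i=1..N. (x' (i, k) - x' (0, k)) * e i k) + (\<Sum>i=1..N. \<Sum>q=1..l. P i q)"
    by (simp add: sum_negf sum_distrib_left[symmetric])
  also have "\<dots> = - (\<Sum>i=1..N. \<Sum>q=1..l. Mu i q)"
    unfolding M using Wt0 by (simp add: sum.distrib)
  finally show ?thesis unfolding Mu_sum x'_def by simp
qed

end


context sys begin

lemma Fsys_cong: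
  assumes "\<And>j. j \<in> Dom \<Longrightarrow> x j = y j" "p \<in> Dom"
  shows "Fsys x p = Fsys y p"
proof -
  define R where "R = (\<Sum>j\<in>Dom. \<bar>x j\<bar> + \<bar>y j\<bar>)"
  have bx: "inbox Dom R x" "inbox Dom R y" unfolding inbox_def R_def
    by (auto intro!: member_le_sum[OF _ _ Dom_fin] order_trans[OF _ member_le_sum[OF _ _ Dom_fin]])
  obtain M L where "0 \<le> L" "\<And>x y. inbox Dom R x \<Longrightarrow> inbox Dom R y \<Longrightarrow>
      \<bar>Fsys x p\<bar> \<le> M \<and> \<bar>Fsys x p - Fsys y p\<bar> \<le> L * (\<Sum>j\<in>Dom. \<bar>x j - y j\<bar>)"
    using goodE[OF good_Fsys[OF assms(2)], where R=R] by metis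
  then have "\<bar>Fsys x p - Fsys y p\<bar> \<le> L * (\<Sum>j\<in>Dom. \<bar>x j - y j\<bar>)" using bx by blast
  also have "(\<Sum>j\<in>Dom. \<bar>x j - y j\<bar>) = 0" using assms(1) by simp
  finally show ?thesis by simp
qed

lemma Bf_cong:
  assumes "\<And>i. i \<in> {0..N} \<Longrightarrow> y i = y' i" "\<And>i. i \<in> {1..N} \<Longrightarrow> z i = z' i"
  shows "Bf y z = Bf y' z'"
proof -
  have "lin y i = lin y' i" if i: "i \<in> {1..N}" for i
    unfolding lin_def
  proof (intro sum.cong refl)
    fix j assume "j \<in> nbrs E N i"
    then have "j \<in> {0..N}" using nbrs_sub by blast
    then show "hat y j - y i = hat y' j - y' i" using assms(1) i by (auto simp: hat_def)
  qed
  then show ?thesis unfolding Bf_def using assms(2) by (intro sum.cong refl) auto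
qed

lemma dZf_cong:
  assumes "\<And>j. j \<in> Dom \<Longrightarrow> x' j = x'' j"
  shows "dZf x x' = dZf x x''"
proof -
  have y: "ytil x' k i = ytil x'' k i" if "k \<in> {1..2*l}" "i \<in> {0..N}" for k i
    unfolding ytil_def using assms that by (auto simp: Dom_def)
  show ?thesis
    unfolding dZf_def
    by (intro arg_cong2[where f="(+)"] arg_cong2[where f="(*)"] refl sum.cong arg_cong[where f=uminus]
        Bf_cong y) (use assms in \<open>auto simp: Dom_def\<close>)
qed

lemma Zf_cong:
  assumes "\<And>j. j \<in> Dom \<Longrightarrow> x j = y j"
  shows "Zf x = Zf y"
proof -
  have yy: "ytil x k i = ytil y k i" if "k \<in> {1..2*l}" "i \<in> {0..N}" for k i
    unfolding ytil_def using assms that by (auto simp: Dom_def)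
  show ?thesis
    unfolding Zf_def
    by (intro arg_cong2[where f="(+)"] arg_cong2[where f="(*)"] refl sum.cong arg_cong[where f=uminus]
        Bf_cong yy arg_cong[where f="\<lambda>a. a\<^sup>2"] arg_cong2[where f="(-)"]) (use assms in \<open>auto simp: Dom_def\<close>)
qed

lemma dZf_F_le: "dZf x (Fsys x) \<le> 0"
  unfolding dZf_F using mu1 by (simp add: sum_nonneg)

lemma existence:
  "\<exists>X. X 0 = x0 \<and> (\<forall>t\<ge>0. \<forall>j\<in>Dom. ((\<lambda>s. X s j) has_real_derivative Fsys (X t) j) (at t within {0..}))"
proof -
  define C where "C = Zf x0"
  obtain B where B: "\<And>x. Zf x \<le> C + 1 \<Longrightarrow> \<forall>j\<in>Dom. \<bar>x j\<bar> \<le> B" using coerc[of "C + 1"] by blast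
  define R where "R = max B 0"
  have R0: "0 \<le> R" by (simp add: R_def)
  define clip where "clip x = (\<lambda>j. max (- R) (min R (x j)))" for x :: "nat \<times> nat \<Rightarrow> real"
  define Fc where "Fc x j = Fsys (clip x) j" for x j
  obtain M L where HML: "0 \<le> L" "\<forall>j\<in>Dom. \<forall>x y. inbox Dom R x \<longrightarrow> inbox Dom R y \<longrightarrow>
      \<bar>Fsys x j\<bar> \<le> M \<and> \<bar>Fsys x j - Fsys y j\<bar> \<le> L * (\<Sum>i\<in>Dom. \<bar>x i - y i\<bar>)"
    using good_unif[OF Dom_fin, where f="\<lambda>j x. Fsys x j" and D=Dom and R=R] good_Fsys by blast
  have cb: "inbox Dom R (clip x)" for x unfolding clip_def by (rule clip_inbox[OF R0])
  have bnd: "\<bar>Fc x j\<bar> \<le> M" if "j \<in> Dom" for x j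
    using HML(2) that cb unfolding Fc_def by blast
  have lip: "\<bar>Fc x j - Fc y j\<bar> \<le> L * (\<Sum>i\<in>Dom. \<bar>x i - y i\<bar>)" if "j \<in> Dom" for x y j
  proof -
    have "\<bar>Fc x j - Fc y j\<bar> \<le> L * (\<Sum>i\<in>Dom. \<bar>clip x i - clip y i\<bar>)"
      using HML(2) that cb unfolding Fc_def by blast
    also have "\<dots> \<le> L * (\<Sum>i\<in>Dom. \<bar>x i - y i\<bar>)"
      unfolding clip_def by (intro mult_left_mono[OF _ HML(1)] sum_mono clip_lip)
    finally show ?thesis .
  qed
  have "\<exists>X. X 0 = x0 \<and> (\<forall>t\<ge>0. \<forall>j\<in>Dom. ((\<lambda>s. X s j) has_real_derivative Fc (X t) j) (at t within {0..}))"
    by (rule picard[where F=Fc and D=Dom and L=L and M=M]) (simp_all add: Dom_fin HML(1) bnd lip)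
  then obtain X where X0: "X 0 = x0"
    and dX: "\<forall>t\<ge>0. \<forall>j\<in>Dom. ((\<lambda>s. X s j) has_real_derivative Fc (X t) j) (at t within {0..})"
    by blast
  have inb: "\<forall>j\<in>Dom. \<bar>X t j\<bar> \<le> R" if "Zf (X t) \<le> C + 1" for t
    using B[OF that] by (auto simp: R_def)
  have Fc_eq: "Fc (X t) j = Fsys (X t) j" if "Zf (X t) \<le> C + 1" "j \<in> Dom" for t j
    unfolding Fc_def
  proof (rule Fsys_cong[OF _ that(2)])
    fix i assume "i \<in> Dom"
    then show "clip (X t) i = X t i" using inb[OF that(1)] unfolding clip_def by (auto simp: abs_le_iff)
  qed
  have Zle: "Zf (X t) \<le> C" if t: "0 \<le> t" for t
  proof (rule barrier[of "\<lambda>t. Zf (X t)" "\<lambda>t. dZf (X t) (Fc (X t))"])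
    show "((\<lambda>t. Zf (X t)) has_real_derivative dZf (X t) (Fc (X t))) (at t within {0..})" if "0 \<le> t" for t
      by (rule Zf_deriv) (use dX that in auto)
    show "dZf (X t) (Fc (X t)) \<le> 0" if "0 \<le> t" "Zf (X t) \<le> C + 1" for t
    proof -
      have "dZf (X t) (Fc (X t)) = dZf (X t) (Fsys (X t))"
        by (rule dZf_cong) (rule Fc_eq[OF that(2)])
      then show ?thesis using dZf_F_le by simp
    qed
    show "Zf (X 0) \<le> C" using X0 by (simp add: C_def)
  qed fact
  show ?thesis
  proof (rule exI[of _ X], intro conjI allI impI ballI)
    show "X 0 = x0" by fact
    fix t :: real and j assume t: "0 \<le> t" and j: "j \<in> Dom"
    have "Fc (X t) j = Fsys (X t) j" using Fc_eq[OF _ j, of t] Zle[OF t] by simp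
    then show "((\<lambda>s. X s j) has_real_derivative Fsys (X t) j) (at t within {0..})"
      using dX t j by metis
  qed
qed

end


lemma tendsto_sq_zero:
  fixes f :: "real \<Rightarrow> real"
  assumes "((\<lambda>t. (f t)\<^sup>2) \<longlongrightarrow> 0) at_top"
  shows "(f \<longlongrightarrow> 0) at_top"
proof -
  have "((\<lambda>t. sqrt ((f t)\<^sup>2)) \<longlongrightarrow> sqrt 0) at_top" by (intro tendsto_intros assms)
  then have "((\<lambda>t. \<bar>f t\<bar>) \<longlongrightarrow> 0) at_top" by simp
  then show ?thesis by (simp add: tendsto_rabs_zero_iff)
qed

lemma tendsto_bdd_mult_zero:
  fixes f g :: "real \<Rightarrow> real"
  assumes "\<And>t. 0 \<le> t \<Longrightarrow> \<bar>f t\<bar> \<le> B" "(g \<longlongrightarrow> 0) at_top"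
  shows "((\<lambda>t. f t * g t) \<longlongrightarrow> 0) at_top"
proof (rule Lim_null_comparison)
  show "\<forall>\<^sub>F t in at_top. norm (f t * g t) \<le> B * \<bar>g t\<bar>"
    unfolding eventually_at_top_linorder
    by (rule exI[of _ 0]) (auto simp: abs_mult intro!: mult_right_mono assms(1))
  have "((\<lambda>t. B * \<bar>g t\<bar>) \<longlongrightarrow> B * \<bar>0\<bar>) at_top" by (intro tendsto_intros assms)
  then show "((\<lambda>t. B * \<bar>g t\<bar>) \<longlongrightarrow> 0) at_top" by simp
qed

context sys begin

context
  fixes X :: "real \<Rightarrow> nat \<times> nat \<Rightarrow> real"
  assumes dX: "\<forall>t\<ge>0. \<forall>j\<in>Dom. ((\<lambda>s. X s j) has_real_derivative Fsys (X t) j) (at t within {0..})"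
begin

lemma zd: "0 \<le> t \<Longrightarrow> ((\<lambda>s. Zf (X s)) has_real_derivative dZf (X t) (Fsys (X t))) (at t within {0..})"
  by (rule Zf_deriv) (use dX in auto)

lemma zmono: "0 \<le> s \<Longrightarrow> s \<le> t \<Longrightarrow> Zf (X t) \<le> Zf (X s)"
  by (rule nonincr_deriv[OF zd]) (auto intro: dZf_F_le)

lemma bounded: "\<exists>B. \<forall>t\<ge>0. \<forall>j\<in>Dom. \<bar>X t j\<bar> \<le> B"
proof -
  obtain B where "\<And>x. Zf x \<le> Zf (X 0) \<Longrightarrow> \<forall>j\<in>Dom. \<bar>x j\<bar> \<le> B" using coerc[of "Zf (X 0)"] by blast
  then show ?thesis using zmono[of 0] by blast
qed

lemma timelip:
  assumes g: "good Dom g"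
  shows "\<exists>K. \<forall>s t. 0 \<le> s \<longrightarrow> 0 \<le> t \<longrightarrow> \<bar>g (X s) - g (X t)\<bar> \<le> K * \<bar>s - t\<bar>"
proof -
  obtain B where B: "\<forall>t\<ge>0. \<forall>j\<in>Dom. \<bar>X t j\<bar> \<le> B" using bounded by blast
  have inb: "inbox Dom B (X t)" if "0 \<le> t" for t using B that by (simp add: inbox_def)
  obtain M1 L1 where HM: "0 \<le> L1" "\<forall>j\<in>Dom. \<forall>x y. inbox Dom B x \<longrightarrow> inbox Dom B y \<longrightarrow>
      \<bar>Fsys x j\<bar> \<le> M1 \<and> \<bar>Fsys x j - Fsys y j\<bar> \<le> L1 * (\<Sum>i\<in>Dom. \<bar>x i - y i\<bar>)"
    using good_unif[OF Dom_fin, where f="\<lambda>j x. Fsys x j" and D=Dom and R=B] good_Fsys by blast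
  have cl: "\<bar>X s j - X t j\<bar> \<le> M1 * \<bar>s - t\<bar>" if "0 \<le> s" "0 \<le> t" "j \<in> Dom" for s t j
  proof (rule lip_deriv[of "\<lambda>s. X s j" "\<lambda>t. Fsys (X t) j"])
    show "((\<lambda>s. X s j) has_real_derivative Fsys (X x) j) (at x within {0..})" if "0 \<le> x" for x
      using dX that \<open>j \<in> Dom\<close> by blast
    show "\<bar>Fsys (X x) j\<bar> \<le> M1" if "0 \<le> x" for x using HM(2) inb[OF that] \<open>j \<in> Dom\<close> by blast
  qed fact+
  obtain M L where HL: "0 \<le> L" "\<And>x y. inbox Dom B x \<Longrightarrow> inbox Dom B y \<Longrightarrow>
      \<bar>g x\<bar> \<le> M \<and> \<bar>g x - g y\<bar> \<le> L * (\<Sum>j\<in>Dom. \<bar>x j - y j\<bar>)"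
    using goodE[OF g, where R=B] by metis
  show ?thesis
  proof (rule exI[of _ "L * (real (card Dom) * M1)"], intro allI impI)
    fix s t :: real assume st: "0 \<le> s" "0 \<le> t"
    have "\<bar>g (X s) - g (X t)\<bar> \<le> L * (\<Sum>j\<in>Dom. \<bar>X s j - X t j\<bar>)" using HL(2) inb st by blast
    also have "\<dots> \<le> L * (\<Sum>j\<in>Dom. M1 * \<bar>s - t\<bar>)"
      using cl st by (intro mult_left_mono[OF _ HL(1)] sum_mono) auto
    also have "\<dots> = L * (real (card Dom) * M1) * \<bar>s - t\<bar>" by simp
    finally show "\<bar>g (X s) - g (X t)\<bar> \<le> L * (real (card Dom) * M1) * \<bar>s - t\<bar>" .
  qed
qed

definition Gf :: "(nat \<times> nat \<Rightarrow> real) \<Rightarrow> real" where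
  "Gf x = - mu1 * (\<Sum>k=1..2*l. \<Sum>i=1..N. (evx x i k)\<^sup>2)"

lemma good_Gf: "good Dom Gf"
  unfolding Gf_def power2_eq_square
  by (intro good_cmult good_sum good_mult good_evx) auto

lemma G_to_0: "((\<lambda>t. Gf (X t)) \<longlongrightarrow> 0) at_top"
proof -
  obtain K where K: "\<forall>s t. 0 \<le> s \<longrightarrow> 0 \<le> t \<longrightarrow> \<bar>Gf (X s) - Gf (X t)\<bar> \<le> K * \<bar>s - t\<bar>"
    using timelip[OF good_Gf] by blast
  show ?thesis
  proof (rule barbalat[where K=K])
  show "((\<lambda>s. Zf (X s)) has_real_derivative Gf (X x)) (at x within {0..})" if "0 \<le> x" for x
    using zd[OF that] by (simp add: dZf_F Gf_def)
  show "cauchy_at_top (\<lambda>s. Zf (X s))"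
    by (rule mono_cauchy_at_top) (auto intro: zmono Zf_nonneg)
  show "\<bar>Gf (X s) - Gf (X t)\<bar> \<le> K * \<bar>s - t\<bar>" if "0 \<le> s" "0 \<le> t" for s t using that K by blast
  qed
qed

lemma e_to_0:
  assumes "i \<in> {1..N}" "k \<in> {1..2*l}"
  shows "((\<lambda>t. evx (X t) i k) \<longlongrightarrow> 0) at_top"
proof (rule tendsto_sq_zero, rule Lim_null_comparison)
  show "\<forall>\<^sub>F t in at_top. norm ((evx (X t) i k)\<^sup>2) \<le> (- 1 / mu1) * Gf (X t)"
  proof (intro always_eventually allI)
    fix t
    have "(evx (X t) i k)\<^sup>2 \<le> (\<Sum>i=1..N. (evx (X t) i k)\<^sup>2)"
      by (rule member_le_sum[OF assms(1)]) auto
    also have "\<dots> \<le> (\<Sum>k=1..2*l. \<Sum>i=1..N. (evx (X t) i k)\<^sup>2)"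
      by (rule member_le_sum[OF assms(2)]) (auto intro: sum_nonneg)
    also have "\<dots> = (- 1 / mu1) * Gf (X t)" using mu1 by (simp add: Gf_def)
    finally show "norm ((evx (X t) i k)\<^sup>2) \<le> (- 1 / mu1) * Gf (X t)" by simp
  qed
  have "((\<lambda>t. (- 1 / mu1) * Gf (X t)) \<longlongrightarrow> (- 1 / mu1) * 0) at_top" by (intro tendsto_intros G_to_0)
  then show "((\<lambda>t. (- 1 / mu1) * Gf (X t)) \<longlongrightarrow> 0) at_top" by simp
qed

lemma y_to_0:
  assumes i: "i \<in> {1..N}" and k: "k \<in> {1..2*l}"
  shows "((\<lambda>t. X t (i, k) - X t (0, k)) \<longlongrightarrow> 0) at_top"
proof -
  obtain B where B: "\<forall>t\<ge>0. \<forall>j\<in>Dom. \<bar>X t j\<bar> \<le> B" using bounded by blast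
  obtain c where c: "c \<ge> 0" "\<And>y i. i \<in> {1..N} \<Longrightarrow> (y i)\<^sup>2 \<le> c * (- Bf y y)"
    using coerc_eta by blast
  have yb: "\<bar>ytil (X t) k i'\<bar> \<le> 2 * B" if "0 \<le> t" "i' \<in> {1..N}" for t i'
  proof -
    have "(i', k) \<in> Dom" "(0, k) \<in> Dom" using that k by (auto simp: Dom_def)
    then show ?thesis unfolding ytil_def using B that by (smt (verit))
  qed
  have Bf_eq: "- Bf (ytil (X t) k) (ytil (X t) k) = - (\<Sum>i'=1..N. ytil (X t) k i' * evx (X t) i' k)" for t
    unfolding Bf_def by (intro arg_cong[where f=uminus] sum.cong refl) (simp add: lin_ytil)
  have "((\<lambda>t. \<Sum>i'=1..N. ytil (X t) k i' * evx (X t) i' k) \<longlongrightarrow> 0) at_top"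
  proof -
    have "((\<lambda>t. \<Sum>i'=1..N. ytil (X t) k i' * evx (X t) i' k) \<longlongrightarrow> (\<Sum>i'=1..N. 0)) at_top"
      using yb k by (intro tendsto_sum tendsto_bdd_mult_zero[of _ "2 * B"] e_to_0) auto
    then show ?thesis by simp
  qed
  then have Q: "((\<lambda>t. c * (- Bf (ytil (X t) k) (ytil (X t) k))) \<longlongrightarrow> 0) at_top"
    unfolding Bf_eq using tendsto_mult[OF tendsto_const[of c], of _ 0] tendsto_minus by fastforce
  have "((\<lambda>t. ytil (X t) k i) \<longlongrightarrow> 0) at_top"
  proof (rule tendsto_sq_zero, rule Lim_null_comparison[OF _ Q])
    show "\<forall>\<^sub>F t in at_top. norm ((ytil (X t) k i)\<^sup>2) \<le> c * (- Bf (ytil (X t) k) (ytil (X t) k))"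
      using c(2)[OF i] by simp
  qed
  then show ?thesis by (simp add: ytil_def)
qed

lemma yd_to_0:
  assumes i: "i \<in> {1..N}" and k: "k \<in> {1..2*l}"
  shows "((\<lambda>t. Fsys (X t) (i, k) - Fsys (X t) (0, k)) \<longlongrightarrow> 0) at_top"
proof -
  have D: "(i, k) \<in> Dom" "(0, k) \<in> Dom" using i k by (auto simp: Dom_def)
  have "good Dom (\<lambda>x. Fsys x (i, k) - Fsys x (0, k))" using D by (intro good_diff good_Fsys)
  from timelip[OF this] obtain K where K:
    "\<forall>s t. 0 \<le> s \<longrightarrow> 0 \<le> t \<longrightarrow> \<bar>Fsys (X s) (i, k) - Fsys (X s) (0, k) - (Fsys (X t) (i, k) - Fsys (X t) (0, k))\<bar> \<le> K * \<bar>s - t\<bar>"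
    by blast
  show ?thesis
  proof (rule barbalat[where K=K])
  show "((\<lambda>t. X t (i, k) - X t (0, k)) has_real_derivative Fsys (X x) (i, k) - Fsys (X x) (0, k)) (at x within {0..})"
    if "0 \<le> x" for x using dX that D by (intro DERIV_diff) auto
  show "cauchy_at_top (\<lambda>t. X t (i, k) - X t (0, k))" by (rule tendsto_cauchy_at_top[OF y_to_0[OF i k]])
  show "\<bar>Fsys (X s) (i, k) - Fsys (X s) (0, k) - (Fsys (X t) (i, k) - Fsys (X t) (0, k))\<bar> \<le> K * \<bar>s - t\<bar>"
    if "0 \<le> s" "0 \<le> t" for s t using that K by blast
  qed
qed

end
end


context sys begin

definition pack :: "(real \<Rightarrow> nat \<Rightarrow> real) \<Rightarrow> (nat \<Rightarrow> real \<Rightarrow> nat \<Rightarrow> real) \<Rightarrow> (nat \<Rightarrow> real \<Rightarrow> nat \<Rightarrow> real) \<Rightarrow> real \<Rightarrow> nat \<times> nat \<Rightarrow> real" where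
  "pack v eta om t p = (if fst p = 0 then v t (snd p) else if fst p \<le> N then eta (fst p) t (snd p) else om (fst p - N) t (snd p))"

lemma evx_pack:
  "evx (pack v eta om t) i k = (\<Sum>j\<in>nbrs E N i. (if j = 0 then v t else eta j t) k - pack v eta om t (i, k))"
  unfolding evx_def
proof (intro sum.cong refl)
  fix j assume "j \<in> nbrs E N i"
  then have "j \<in> {0..N}" using nbrs_sub by blast
  then show "pack v eta om t (j, k) - pack v eta om t (i, k) = (if j = 0 then v t else eta j t) k - pack v eta om t (i, k)"
    by (auto simp: pack_def)
qed

lemma part1:
  "\<exists>v eta om.
        (\<forall>k\<in>{1..2*l}. v 0 k = v0 k) \<and>
        (\<forall>i\<in>{1..N}. \<forall>k\<in>{1..2*l}. eta i 0 k = eta0 i k) \<and>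
        (\<forall>i\<in>{1..N}. \<forall>k\<in>{1..l}. om i 0 k = om0 i k) \<and>
        closed_loop N l E w mu1 mu2 v eta om"
proof -
  define x0 where "x0 p = (if fst p = 0 then v0 (snd p) else if fst p \<le> N then eta0 (fst p) (snd p) else om0 (fst p - N) (snd p))" for p
  obtain X where X0: "X 0 = x0"
    and dX: "\<forall>t\<ge>0. \<forall>j\<in>Dom. ((\<lambda>s. X s j) has_real_derivative Fsys (X t) j) (at t within {0..})"
    using existence by blast
  define v where "v t k = X t (0, k)" for t k
  define eta where "eta i t k = X t (i, k)" for i t k
  define om where "om i t k = X t (N + i, k)" for i t k
  have ev: "(\<Sum>j\<in>nbrs E N i. (if j = 0 then v t else eta j t) k - eta i t k) = evx (X t) i k" for i t k
    unfolding evx_def v_def eta_def by (intro sum.cong refl) auto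
  show ?thesis
  proof (rule exI[of _ v], rule exI[of _ eta], rule exI[of _ om], intro conjI)
    show "\<forall>k\<in>{1..2*l}. v 0 k = v0 k" by (simp add: v_def X0 x0_def)
    show "\<forall>i\<in>{1..N}. \<forall>k\<in>{1..2*l}. eta i 0 k = eta0 i k" by (simp add: eta_def X0 x0_def)
    show "\<forall>i\<in>{1..N}. \<forall>k\<in>{1..l}. om i 0 k = om0 i k" by (simp add: om_def X0 x0_def)
    show "closed_loop N l E w mu1 mu2 v eta om"
      unfolding closed_loop_def Let_def
    proof (intro conjI allI impI ballI)
      fix t :: real and k assume t: "0 \<le> t" and k: "k \<in> {1..2*l}"
      have "(0, k) \<in> Dom" using k by (auto simp: Dom_def)
      then have "((\<lambda>s. X s (0, k)) has_real_derivative Fsys (X t) (0, k)) (at t within {0..})" using dX t by blast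
      then show "((\<lambda>s. v s k) has_real_derivative mulv (Smat w) (2 * l) (v t) k) (at t within {0..})"
        by (simp add: Fsys_def v_def[abs_def])
    next
      fix i and t :: real and k assume i: "i \<in> {1..N}" and t: "0 \<le> t" and k: "k \<in> {1..2*l}"
      have "(i, k) \<in> Dom" using i k by (auto simp: Dom_def)
      then have "((\<lambda>s. X s (i, k)) has_real_derivative Fsys (X t) (i, k)) (at t within {0..})" using dX t by blast
      then show "((\<lambda>s. eta i s k) has_real_derivative mulv (Smat (om i t)) (2 * l) (eta i t) k +
          mu1 * (\<Sum>j\<in>nbrs E N i. (if j = 0 then v t else eta j t) k - eta i t k)) (at t within {0..})"
        unfolding ev using i by (simp add: Fsys_def eta_def[abs_def] om_def[abs_def])
    next
      fix i and t :: real and k assume i: "i \<in> {1..N}" and t: "0 \<le> t" and k: "k \<in> {1..l}"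
      have "(N + i, k) \<in> Dom" using i k by (auto simp: Dom_def)
      then have "((\<lambda>s. X s (N + i, k)) has_real_derivative Fsys (X t) (N + i, k)) (at t within {0..})" using dX t by blast
      moreover have "(\<lambda>k. \<Sum>j\<in>nbrs E N i. (if j = 0 then v t else eta j t) k - eta i t k) = (\<lambda>k. evx (X t) i k)"
        using ev by auto
      ultimately show "((\<lambda>s. om i s k) has_real_derivative mu2 * mulv (phi (\<lambda>k. \<Sum>j\<in>nbrs E N i. (if j = 0 then v t else eta j t) k - eta i t k)) (2 * l) (eta i t) k) (at t within {0..})"
        using i by (simp add: Fsys_def eta_def[abs_def] om_def[abs_def])
    qed
  qed
qed

end


context sys begin

lemma Sd_identity:
  assumes i: "i \<in> {1..N}" and k: "k \<in> {1..2*l}"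
  shows "mulv (Smat (\<lambda>q. x (N+i, q) - w q)) (2*l) (\<lambda>q. x (i, q)) k =
    (Fsys x (i, k) - Fsys x (0, k)) - mu1 * evx x i k
    - (if odd k then w ((k+1) div 2) else - w (k div 2)) * (x (i, if odd k then k+1 else k-1) - x (0, if odd k then k+1 else k-1))"
proof -
  have F1: "Fsys x (i, k) = mulv (Smat (\<lambda>q. x (N+i, q))) (2*l) (\<lambda>q. x (i, q)) k + mu1 * evx x i k"
    using i by (simp add: Fsys_def)
  have F0: "Fsys x (0, k) = mulv (Smat w) (2*l) (\<lambda>q. x (0, q)) k" by (simp add: Fsys_def)
  show ?thesis unfolding F1 F0 mulv_Smat[OF k]
    by (cases "odd k") (simp_all add: algebra_simps)
qed

lemma tendsto_zero_mult_bdd: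
  fixes f g :: "real \<Rightarrow> real"
  assumes "\<And>t. 0 \<le> t \<Longrightarrow> \<bar>f t\<bar> \<le> B" "(g \<longlongrightarrow> 0) at_top"
  shows "((\<lambda>t. g t * f t) \<longlongrightarrow> 0) at_top"
proof -
  have "((\<lambda>t. f t * g t) \<longlongrightarrow> 0) at_top" by (rule tendsto_bdd_mult_zero[of f B g]) (use assms in auto)
  then show ?thesis by (simp add: mult.commute)
qed

lemma part2:
  assumes cl: "closed_loop N l E w mu1 mu2 v eta om"
  shows "(\<exists>B. \<forall>t\<ge>0. (\<forall>i\<in>{1..N}. \<forall>k\<in>{1..2*l}. \<bar>eta i t k\<bar> \<le> B) \<and>
                     (\<forall>i\<in>{1..N}. \<forall>k\<in>{1..l}. \<bar>om i t k\<bar> \<le> B)) \<and>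
        (\<forall>i\<in>{1..N}. \<forall>k\<in>{1..2*l}. ((\<lambda>t. eta i t k - v t k) \<longlongrightarrow> 0) at_top) \<and>
        (\<forall>i\<in>{1..N}. \<forall>k\<in>{1..l}.
           ((\<lambda>t. deriv (\<lambda>s. om i s k - w k) t) \<longlongrightarrow> 0) at_top) \<and>
        (\<forall>i\<in>{1..N}. \<forall>k\<in>{1..2*l}.
           ((\<lambda>t. mulv (Smat (\<lambda>q. om i t q - w q)) (2*l) (eta i t) k) \<longlongrightarrow> 0) at_top)"
proof -
  define X where "X = pack v eta om"
  have Xv: "X t (0, k) = v t k" for t k by (simp add: X_def pack_def)
  have Xe: "X t (i, k) = eta i t k" if "i \<in> {1..N}" for i t k using that by (simp add: X_def pack_def)
  have Xo: "X t (N + i, k) = om i t k" if "i \<in> {1..N}" for i t k using that by (simp add: X_def pack_def)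
  have Xv': "(\<lambda>q. X t (0, q)) = v t" for t by (simp add: Xv fun_eq_iff)
  have Xe': "(\<lambda>q. X t (i, q)) = eta i t" if "i \<in> {1..N}" for i t using Xe[OF that] by (simp add: fun_eq_iff)
  have Xo': "(\<lambda>q. X t (N + i, q)) = om i t" if "i \<in> {1..N}" for i t using Xo[OF that] by (simp add: fun_eq_iff)
  have ev: "evx (X t) i k = (\<Sum>j\<in>nbrs E N i. (if j = 0 then v t else eta j t) k - eta i t k)" if "i \<in> {1..N}" for i t k
    unfolding X_def evx_pack using Xe[OF that] by (simp add: X_def)
  have ev': "(\<lambda>k. evx (X t) i k) = (\<lambda>k. \<Sum>j\<in>nbrs E N i. (if j = 0 then v t else eta j t) k - eta i t k)" if "i \<in> {1..N}" for i t
    using ev[OF that] by auto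
  have cv: "\<forall>t\<ge>0. \<forall>k\<in>{1..2*l}. ((\<lambda>s. v s k) has_real_derivative mulv (Smat w) (2*l) (v t) k) (at t within {0..})"
    and ce: "\<forall>i\<in>{1..N}. \<forall>t\<ge>0. \<forall>k\<in>{1..2*l}. ((\<lambda>s. eta i s k) has_real_derivative
              (mulv (Smat (om i t)) (2*l) (eta i t) k + mu1 * (\<Sum>j\<in>nbrs E N i. (if j = 0 then v t else eta j t) k - eta i t k))) (at t within {0..})"
    and co: "\<forall>i\<in>{1..N}. \<forall>t\<ge>0. \<forall>k\<in>{1..l}. ((\<lambda>s. om i s k) has_real_derivative
              (mu2 * mulv (phi (\<lambda>k. \<Sum>j\<in>nbrs E N i. (if j = 0 then v t else eta j t) k - eta i t k)) (2*l) (eta i t) k)) (at t within {0..})"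
    using cl unfolding closed_loop_def Let_def by auto
  have dX: "\<forall>t\<ge>0. \<forall>j\<in>Dom. ((\<lambda>s. X s j) has_real_derivative Fsys (X t) j) (at t within {0..})"
  proof (intro allI impI ballI)
    fix t :: real and j assume t: "0 \<le> t" and j: "j \<in> Dom"
    obtain i k where ij: "j = (i, k)" by (cases j)
    show "((\<lambda>s. X s j) has_real_derivative Fsys (X t) j) (at t within {0..})"
    proof (cases "i = 0")
      case True
      then have k: "k \<in> {1..2*l}" using j ij by (auto simp: Dom_def)
      show ?thesis using cv t k unfolding ij True Fsys_def by (simp add: Xv Xv')
    next
      case False
      show ?thesis
      proof (cases "i \<le> N")
        case True
        then have i: "i \<in> {1..N}" and k: "k \<in> {1..2*l}" using False j ij by (auto simp: Dom_def)
        show ?thesis using ce i t k False True unfolding ij Fsys_def by (simp add: Xe Xe' Xo' ev)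
      next
        case gN: False
        define i' where "i' = i - N"
        have i: "i' \<in> {1..N}" and k: "k \<in> {1..l}" and ii: "i = N + i'" using gN j ij by (auto simp: Dom_def i'_def)
        show ?thesis using co i t k unfolding ij ii Fsys_def by (simp add: Xo Xe' ev')
      qed
    qed
  qed
  obtain B where B: "\<forall>t\<ge>0. \<forall>j\<in>Dom. \<bar>X t j\<bar> \<le> B" using bounded[OF dX] by blast
  have part_a: "\<exists>B. \<forall>t\<ge>0. (\<forall>i\<in>{1..N}. \<forall>k\<in>{1..2*l}. \<bar>eta i t k\<bar> \<le> B) \<and>
                     (\<forall>i\<in>{1..N}. \<forall>k\<in>{1..l}. \<bar>om i t k\<bar> \<le> B)"
  proof (rule exI[of _ B], intro allI impI conjI ballI)
    fix t :: real and i k assume t: "0 \<le> t" and i: "i \<in> {1..N}"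
    { assume k: "k \<in> {1..2*l}"
      then have "(i, k) \<in> Dom" using i by (auto simp: Dom_def)
      then show "\<bar>eta i t k\<bar> \<le> B" using B t Xe[OF i] by metis }
    { assume k: "k \<in> {1..l}"
      then have "(N + i, k) \<in> Dom" using i by (auto simp: Dom_def)
      then show "\<bar>om i t k\<bar> \<le> B" using B t Xo[OF i] by metis }
  qed
  have part_b: "((\<lambda>t. eta i t k - v t k) \<longlongrightarrow> 0) at_top" if i: "i \<in> {1..N}" and k: "k \<in> {1..2*l}" for i k
    using y_to_0[OF dX i k] by (simp add: Xe[OF i] Xv)
  have Xb: "\<bar>X t (i, k)\<bar> \<le> B" if "0 \<le> t" "i \<in> {1..N}" "k \<in> {1..2*l}" for t i k
  proof -
    have "(i, k) \<in> Dom" using that by (auto simp: Dom_def)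
    then show ?thesis using B that by blast
  qed
  have part_c: "((\<lambda>t. deriv (\<lambda>s. om i s k - w k) t) \<longlongrightarrow> 0) at_top" if i: "i \<in> {1..N}" and k: "k \<in> {1..l}" for i k
  proof -
    have k1: "2*k - 1 \<in> {1..2*l}" "2*k \<in> {1..2*l}" using k by auto
    have "((\<lambda>t. mu2 * (evx (X t) i (2*k-1) * X t (i, 2*k) - evx (X t) i (2*k) * X t (i, 2*k-1))) \<longlongrightarrow> mu2 * (0 - 0)) at_top"
      by (intro tendsto_intros tendsto_zero_mult_bdd[of _ B] e_to_0[OF dX] Xb i k1)
    then have lim: "((\<lambda>t. Fsys (X t) (N + i, k)) \<longlongrightarrow> 0) at_top"
      unfolding F_facts(5)[OF k i] by simp
    have "\<forall>\<^sub>F t in at_top. Fsys (X t) (N + i, k) = deriv (\<lambda>s. om i s k - w k) t"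
      unfolding eventually_at_top_linorder
    proof (rule exI[of _ 1], intro allI impI)
      fix t :: real assume t: "1 \<le> t"
      have "((\<lambda>s. om i s k) has_real_derivative Fsys (X t) (N + i, k)) (at t within {0..})"
        using co i k t unfolding Fsys_def by (simp add: Xe' ev')
      moreover have "at t within {0..} = at t" using t by (intro at_within_interior) auto
      ultimately have "((\<lambda>s. om i s k - w k) has_real_derivative Fsys (X t) (N + i, k) - 0) (at t)"
        by (intro DERIV_diff DERIV_const) auto
      then show "Fsys (X t) (N + i, k) = deriv (\<lambda>s. om i s k - w k) t" by (simp add: DERIV_imp_deriv)
    qed
    then show ?thesis using Lim_transform_eventually[OF lim] by blast
  qed
  have part_d: "((\<lambda>t. mulv (Smat (\<lambda>q. om i t q - w q)) (2*l) (eta i t) k) \<longlongrightarrow> 0) at_top"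
    if i: "i \<in> {1..N}" and k: "k \<in> {1..2*l}" for i k
  proof -
    define k' where "k' = (if odd k then k+1 else k-1)"
    define cc where "cc = (if odd k then w ((k+1) div 2) else - w (k div 2))"
    have k': "k' \<in> {1..2*l}" using k unfolding k'_def by (cases "odd k") (auto; presburger)+
    have eq: "mulv (Smat (\<lambda>q. om i t q - w q)) (2*l) (eta i t) k =
      (Fsys (X t) (i, k) - Fsys (X t) (0, k)) - mu1 * evx (X t) i k - cc * (X t (i, k') - X t (0, k'))" for t
      using Sd_identity[OF i k, of "X t"] unfolding k'_def cc_def by (simp add: Xo[OF i] Xe'[OF i])
    have "((\<lambda>t. (Fsys (X t) (i, k) - Fsys (X t) (0, k)) - mu1 * evx (X t) i k - cc * (X t (i, k') - X t (0, k')))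
       \<longlongrightarrow> 0 - mu1 * 0 - cc * 0) at_top"
      by (intro tendsto_intros yd_to_0[OF dX i k] e_to_0[OF dX i k] y_to_0[OF dX i k'])
    then show ?thesis unfolding eq by simp
  qed
  show ?thesis using part_a part_b part_c part_d by blast
qed

end

theorem lemma1:
  fixes N l :: nat and E :: "(nat \<times> nat) set" and w :: "nat \<Rightarrow> real"
  assumes "N \<ge> 1" and "l \<ge> 1"
    and "\<forall>k\<in>{1..l}. w k > 0"
    and "E \<subseteq> {0..N} \<times> {0..N}"
    and "contains_spanning_tree E {0..N} 0"
    and "\<forall>i\<in>{1..N}. \<forall>j\<in>{1..N}. (i, j) \<in> E \<longleftrightarrow> (j, i) \<in> E"
  shows "\<forall>(v0 :: nat \<Rightarrow> real) (eta0 :: nat \<Rightarrow> nat \<Rightarrow> real) (om0 :: nat \<Rightarrow> nat \<Rightarrow> real) mu1 mu2.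
     mu1 > 0 \<longrightarrow> mu2 > 0 \<longrightarrow>
     (\<exists>v eta om.
        (\<forall>k\<in>{1..2*l}. v 0 k = v0 k) \<and>
        (\<forall>i\<in>{1..N}. \<forall>k\<in>{1..2*l}. eta i 0 k = eta0 i k) \<and>
        (\<forall>i\<in>{1..N}. \<forall>k\<in>{1..l}. om i 0 k = om0 i k) \<and>
        closed_loop N l E w mu1 mu2 v eta om) \<and>
     (\<forall>v eta om.
        (\<forall>k\<in>{1..2*l}. v 0 k = v0 k) \<and>
        (\<forall>i\<in>{1..N}. \<forall>k\<in>{1..2*l}. eta i 0 k = eta0 i k) \<and>
        (\<forall>i\<in>{1..N}. \<forall>k\<in>{1..l}. om i 0 k = om0 i k) \<and>
        closed_loop N l E w mu1 mu2 v eta om \<longrightarrow>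
        (\<exists>B. \<forall>t\<ge>0. (\<forall>i\<in>{1..N}. \<forall>k\<in>{1..2*l}. \<bar>eta i t k\<bar> \<le> B) \<and>
                     (\<forall>i\<in>{1..N}. \<forall>k\<in>{1..l}. \<bar>om i t k\<bar> \<le> B)) \<and>
        (\<forall>i\<in>{1..N}. \<forall>k\<in>{1..2*l}. ((\<lambda>t. eta i t k - v t k) \<longlongrightarrow> 0) at_top) \<and>
        (\<forall>i\<in>{1..N}. \<forall>k\<in>{1..l}.
           ((\<lambda>t. deriv (\<lambda>s. om i s k - w k) t) \<longlongrightarrow> 0) at_top) \<and>
        (\<forall>i\<in>{1..N}. \<forall>k\<in>{1..2*l}.
           ((\<lambda>t. mulv (Smat (\<lambda>q. om i t q - w q)) (2*l) (eta i t) k) \<longlongrightarrow> 0) at_top))"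
proof (intro allI impI)
  fix v0 :: "nat \<Rightarrow> real" and eta0 om0 :: "nat \<Rightarrow> nat \<Rightarrow> real" and mu1 mu2 :: real
  assume m1: "mu1 > 0" and m2: "mu2 > 0"
  interpret S: sys N l E w mu1 mu2
    by unfold_locales (use assms m1 m2 in auto)
  show "(\<exists>v eta om.
        (\<forall>k\<in>{1..2*l}. v 0 k = v0 k) \<and>
        (\<forall>i\<in>{1..N}. \<forall>k\<in>{1..2*l}. eta i 0 k = eta0 i k) \<and>
        (\<forall>i\<in>{1..N}. \<forall>k\<in>{1..l}. om i 0 k = om0 i k) \<and>
        closed_loop N l E w mu1 mu2 v eta om) \<and>
     (\<forall>v eta om.
        (\<forall>k\<in>{1..2*l}. v 0 k = v0 k) \<and>
        (\<forall>i\<in>{1..N}. \<forall>k\<in>{1..2*l}. eta i 0 k = eta0 i k) \<and>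
        (\<forall>i\<in>{1..N}. \<forall>k\<in>{1..l}. om i 0 k = om0 i k) \<and>
        closed_loop N l E w mu1 mu2 v eta om \<longrightarrow>
        (\<exists>B. \<forall>t\<ge>0. (\<forall>i\<in>{1..N}. \<forall>k\<in>{1..2*l}. \<bar>eta i t k\<bar> \<le> B) \<and>
                     (\<forall>i\<in>{1..N}. \<forall>k\<in>{1..l}. \<bar>om i t k\<bar> \<le> B)) \<and>
        (\<forall>i\<in>{1..N}. \<forall>k\<in>{1..2*l}. ((\<lambda>t. eta i t k - v t k) \<longlongrightarrow> 0) at_top) \<and>
        (\<forall>i\<in>{1..N}. \<forall>k\<in>{1..l}.
           ((\<lambda>t. deriv (\<lambda>s. om i s k - w k) t) \<longlongrightarrow> 0) at_top) \<and>
        (\<forall>i\<in>{1..N}. \<forall>k\<in>{1..2*l}.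
           ((\<lambda>t. mulv (Smat (\<lambda>q. om i t q - w q)) (2*l) (eta i t) k) \<longlongrightarrow> 0) at_top))"
  proof (rule conjI)
    show "\<exists>v eta om.
        (\<forall>k\<in>{1..2*l}. v 0 k = v0 k) \<and>
        (\<forall>i\<in>{1..N}. \<forall>k\<in>{1..2*l}. eta i 0 k = eta0 i k) \<and>
        (\<forall>i\<in>{1..N}. \<forall>k\<in>{1..l}. om i 0 k = om0 i k) \<and>
        closed_loop N l E w mu1 mu2 v eta om"
      by (rule S.part1)
  next
    show "\<forall>v eta om.
        (\<forall>k\<in>{1..2*l}. v 0 k = v0 k) \<and>
        (\<forall>i\<in>{1..N}. \<forall>k\<in>{1..2*l}. eta i 0 k = eta0 i k) \<and>
        (\<forall>i\<in>{1..N}. \<forall>k\<in>{1..l}. om i 0 k = om0 i k) \<and>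
        closed_loop N l E w mu1 mu2 v eta om \<longrightarrow>
        (\<exists>B. \<forall>t\<ge>0. (\<forall>i\<in>{1..N}. \<forall>k\<in>{1..2*l}. \<bar>eta i t k\<bar> \<le> B) \<and>
                     (\<forall>i\<in>{1..N}. \<forall>k\<in>{1..l}. \<bar>om i t k\<bar> \<le> B)) \<and>
        (\<forall>i\<in>{1..N}. \<forall>k\<in>{1..2*l}. ((\<lambda>t. eta i t k - v t k) \<longlongrightarrow> 0) at_top) \<and>
        (\<forall>i\<in>{1..N}. \<forall>k\<in>{1..l}.
           ((\<lambda>t. deriv (\<lambda>s. om i s k - w k) t) \<longlongrightarrow> 0) at_top) \<and>
        (\<forall>i\<in>{1..N}. \<forall>k\<in>{1..2*l}.
           ((\<lambda>t. mulv (Smat (\<lambda>q. om i t q - w q)) (2*l) (eta i t) k) \<longlongrightarrow> 0) at_top)"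
    proof (intro allI impI)
      fix v eta om
      assume "(\<forall>k\<in>{1..2*l}. v 0 k = v0 k) \<and>
        (\<forall>i\<in>{1..N}. \<forall>k\<in>{1..2*l}. eta i 0 k = eta0 i k) \<and>
        (\<forall>i\<in>{1..N}. \<forall>k\<in>{1..l}. om i 0 k = om0 i k) \<and>
        closed_loop N l E w mu1 mu2 v eta om"
      then have "closed_loop N l E w mu1 mu2 v eta om" by blast
      then show "(\<exists>B. \<forall>t\<ge>0. (\<forall>i\<in>{1..N}. \<forall>k\<in>{1..2*l}. \<bar>eta i t k\<bar> \<le> B) \<and>
                     (\<forall>i\<in>{1..N}. \<forall>k\<in>{1..l}. \<bar>om i t k\<bar> \<le> B)) \<and>
        (\<forall>i\<in>{1..N}. \<forall>k\<in>{1..2*l}. ((\<lambda>t. eta i t k - v t k) \<longlongrightarrow> 0) at_top) \<and>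
        (\<forall>i\<in>{1..N}. \<forall>k\<in>{1..l}.
           ((\<lambda>t. deriv (\<lambda>s. om i s k - w k) t) \<longlongrightarrow> 0) at_top) \<and>
        (\<forall>i\<in>{1..N}. \<forall>k\<in>{1..2*l}.
           ((\<lambda>t. mulv (Smat (\<lambda>q. om i t q - w q)) (2*l) (eta i t) k) \<longlongrightarrow> 0) at_top)"
        by (rule S.part2)
    qed
  qed
qed

end
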